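(* Let $(G,M,\Delta)$ be a Garside structure, $(H,N,\delta)$ a parabolic substructure, $T$ the set of $(H,N)$-reduced elements of $G$, and $\mathcal S=\mathrm{Div}(\Delta)\setminus\{1\}$. Let $\alpha\in G$, $\beta\in\pi_H(\alpha)$ and $u\in\mathcal S$. Let $\theta\in T$ with $H\theta=H\alpha$, and assume $\theta\in M$. Then there exists $\beta'\in\pi_H(\alpha u)$ such that $d(\beta,\beta')\le3$.
   Context: Let $G$ be a group and $M$ a submonoid with $M\cap M^{-1}=\{1\}$. Define $\alpha\le_L\beta$ iff $\alpha^{-1}\beta\in M$, and $\alpha\le_R\beta$ iff $\beta\alpha^{-1}\in M$. For $a\in M$ let $\mathrm{Div}_L(a)=\{b\in M: b\le_L a\}$, $\mathrm{Div}_R(a)=\{b\in M: b\le_R a\}$; $a$ is balanced if these coincide, and then $\mathrm{Div}(a)$ denotes this set. $M$ is Noetherian if each $a\in M$ admits an $n$ such that $a$ is not a product of more than $n$ non-trivial factors. A Garside structure $(G,M,\Delta)$: $\Delta\in M$ balanced, $M$ Noetherian, $\mathrm{Div}(\Delta)$ finite and generating $M$ as a monoid and $G$ as a group, $(G,\le_L)$ a lattice with meet $\wedge_L$. A parabolic substructure $(H,N,\delta)$: $\delta\in M$ balanced, $H$ (resp. $N$) the subgroup (resp. submonoid) generated by $\mathrm{Div}(\delta)$, and $\mathrm{Div}(\delta)=\mathrm{Div}(\Delta)\cap N$; it is assumed $H\ne\{1\}$. Put $\omega=\delta^{-1}\Delta$. $a\in M$ is unmovable if $\Delta\not\le_L a$;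 every $\alpha\in G$ has a unique right $\Delta$-form $\alpha=a\Delta^p$ ($a\in M$ unmovable, $p\in\mathbb Z$). $a\in M$ is $N$-reduced if $a\wedge_L\delta=1$. $\alpha$ with right $\Delta$-form $a\Delta^p$ is $(H,N)$-reduced if $a$ is $N$-reduced and either $p=0$, or $p<0$ and $\omega\not\le_L a$. With $\lg$ the word length w.r.t. $\mathcal S$: $d(\alpha,\beta)=\lg(\alpha^{-1}\beta)$, $d(\alpha,H)=\min_{\beta\in H}d(\alpha,\beta)$, $\pi_H(\alpha)=\{\beta\in H:d(\alpha,\beta)=d(\alpha,H)\}$. *)

theory Defs
  imports "HOL-Algebra.Algebra"
begin

definition leL :: "('a,'b) monoid_scheme \<Rightarrow> 'a set \<Rightarrow> 'a \<Rightarrow> 'a \<Rightarrow> bool" where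
  "leL G M x y \<longleftrightarrow> inv\<^bsub>G\<^esub> x \<otimes>\<^bsub>G\<^esub> y \<in> M"

definition leR :: "('a,'b) monoid_scheme \<Rightarrow> 'a set \<Rightarrow> 'a \<Rightarrow> 'a \<Rightarrow> bool" where
  "leR G M x y \<longleftrightarrow> y \<otimes>\<^bsub>G\<^esub> inv\<^bsub>G\<^esub> x \<in> M"

definition DivL :: "('a,'b) monoid_scheme \<Rightarrow> 'a set \<Rightarrow> 'a \<Rightarrow> 'a set" where
  "DivL G M a = {b \<in> M. leL G M b a}"

definition DivR :: "('a,'b) monoid_scheme \<Rightarrow> 'a set \<Rightarrow> 'a \<Rightarrow> 'a set" where
  "DivR G M a = {b \<in> M. leR G M b a}"

definition balanced :: "('a,'b) monoid_scheme \<Rightarrow> 'a set \<Rightarrow> 'a \<Rightarrow> bool" where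
  "balanced G M a \<longleftrightarrow> a \<in> M \<and> DivL G M a = DivR G M a"

text \<open>For balanced a, Div(a) is the common value of DivL and DivR.\<close>
definition Div :: "('a,'b) monoid_scheme \<Rightarrow> 'a set \<Rightarrow> 'a \<Rightarrow> 'a set" where
  "Div G M a = DivL G M a"

definition lprod :: "('a,'b) monoid_scheme \<Rightarrow> 'a list \<Rightarrow> 'a" where
  "lprod G xs = foldr (\<lambda>x y. x \<otimes>\<^bsub>G\<^esub> y) xs \<one>\<^bsub>G\<^esub>"

definition monoid_gen :: "('a,'b) monoid_scheme \<Rightarrow> 'a set \<Rightarrow> 'a set" where
  "monoid_gen G S = {lprod G xs | xs. set xs \<subseteq> S}"

definition noetherian :: "('a,'b) monoid_scheme \<Rightarrow> 'a set \<Rightarrow> bool" where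
  "noetherian G M \<longleftrightarrow> (\<forall>a\<in>M. \<exists>n::nat. \<forall>xs. set xs \<subseteq> M - {\<one>\<^bsub>G\<^esub>} \<and> lprod G xs = a \<longrightarrow> length xs \<le> n)"

definition is_meetL :: "('a,'b) monoid_scheme \<Rightarrow> 'a set \<Rightarrow> 'a \<Rightarrow> 'a \<Rightarrow> 'a \<Rightarrow> bool" where
  "is_meetL G M x y m \<longleftrightarrow> m \<in> carrier G \<and> leL G M m x \<and> leL G M m y \<and>
     (\<forall>c\<in>carrier G. leL G M c x \<and> leL G M c y \<longrightarrow> leL G M c m)"

definition is_joinL :: "('a,'b) monoid_scheme \<Rightarrow> 'a set \<Rightarrow> 'a \<Rightarrow> 'a \<Rightarrow> 'a \<Rightarrow> bool" where
  "is_joinL G M x y j \<longleftrightarrow> j \<in> carrier G \<and> leL G M x j \<and> leL G M y j \<and>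
     (\<forall>c\<in>carrier G. leL G M x c \<and> leL G M y c \<longrightarrow> leL G M j c)"

definition meetL :: "('a,'b) monoid_scheme \<Rightarrow> 'a set \<Rightarrow> 'a \<Rightarrow> 'a \<Rightarrow> 'a" where
  "meetL G M x y = (THE m. is_meetL G M x y m)"

definition garside :: "('a,'b) monoid_scheme \<Rightarrow> 'a set \<Rightarrow> 'a \<Rightarrow> bool" where
  "garside G M \<Delta> \<longleftrightarrow>
     group G \<and> submonoid M G \<and> M \<inter> ((\<lambda>x. inv\<^bsub>G\<^esub> x) ` M) = {\<one>\<^bsub>G\<^esub>} \<and>
     balanced G M \<Delta> \<and> noetherian G M \<and> finite (Div G M \<Delta>) \<and>
     monoid_gen G (Div G M \<Delta>) = M \<and> generate G (Div G M \<Delta>) = carrier G \<and>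
     (\<forall>x\<in>carrier G. \<forall>y\<in>carrier G. (\<exists>m. is_meetL G M x y m) \<and> (\<exists>j. is_joinL G M x y j))"

definition parabolic :: "('a,'b) monoid_scheme \<Rightarrow> 'a set \<Rightarrow> 'a \<Rightarrow> 'a set \<Rightarrow> 'a set \<Rightarrow> 'a \<Rightarrow> bool" where
  "parabolic G M \<Delta> H N \<delta> \<longleftrightarrow>
     balanced G M \<delta> \<and> H = generate G (Div G M \<delta>) \<and> N = monoid_gen G (Div G M \<delta>) \<and>
     Div G M \<delta> = Div G M \<Delta> \<inter> N \<and> H \<noteq> {\<one>\<^bsub>G\<^esub>}"

definition unmovable :: "('a,'b) monoid_scheme \<Rightarrow> 'a set \<Rightarrow> 'a \<Rightarrow> 'a \<Rightarrow> bool" where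
  "unmovable G M \<Delta> a \<longleftrightarrow> a \<in> M \<and> \<not> leL G M \<Delta> a"

definition N_reduced :: "('a,'b) monoid_scheme \<Rightarrow> 'a set \<Rightarrow> 'a \<Rightarrow> 'a \<Rightarrow> bool" where
  "N_reduced G M \<delta> a \<longleftrightarrow> a \<in> M \<and> meetL G M a \<delta> = \<one>\<^bsub>G\<^esub>"

text \<open>(H,N)-reduced: the (unique) right Delta-form a Delta^p of alpha satisfies the conditions.\<close>
definition HN_reduced :: "('a,'b) monoid_scheme \<Rightarrow> 'a set \<Rightarrow> 'a \<Rightarrow> 'a \<Rightarrow> 'a \<Rightarrow> bool" where
  "HN_reduced G M \<Delta> \<delta> \<alpha> \<longleftrightarrow>
     (\<exists>a (p::int). unmovable G M \<Delta> a \<and> \<alpha> = a \<otimes>\<^bsub>G\<^esub> (\<Delta> [^]\<^bsub>G\<^esub> p) \<and>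
        N_reduced G M \<delta> a \<and>
        (p = 0 \<or> (p < 0 \<and> \<not> leL G M (inv\<^bsub>G\<^esub> \<delta> \<otimes>\<^bsub>G\<^esub> \<Delta>) a)))"

definition HN_reduced_set :: "('a,'b) monoid_scheme \<Rightarrow> 'a set \<Rightarrow> 'a \<Rightarrow> 'a \<Rightarrow> 'a set" where
  "HN_reduced_set G M \<Delta> \<delta> = {\<alpha> \<in> carrier G. HN_reduced G M \<Delta> \<delta> \<alpha>}"

definition wlen :: "('a,'b) monoid_scheme \<Rightarrow> 'a set \<Rightarrow> 'a \<Rightarrow> nat" where
  "wlen G S x = (LEAST n. \<exists>xs. length xs = n \<and> set xs \<subseteq> S \<union> (\<lambda>x. inv\<^bsub>G\<^esub> x) ` S \<and> lprod G xs = x)"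

definition gdist :: "('a,'b) monoid_scheme \<Rightarrow> 'a set \<Rightarrow> 'a \<Rightarrow> 'a \<Rightarrow> nat" where
  "gdist G S x y = wlen G S (inv\<^bsub>G\<^esub> x \<otimes>\<^bsub>G\<^esub> y)"

definition setdist :: "('a,'b) monoid_scheme \<Rightarrow> 'a set \<Rightarrow> 'a \<Rightarrow> 'a set \<Rightarrow> nat" where
  "setdist G S x H = (LEAST n. \<exists>y\<in>H. gdist G S x y = n)"

definition proj :: "('a,'b) monoid_scheme \<Rightarrow> 'a set \<Rightarrow> 'a set \<Rightarrow> 'a \<Rightarrow> 'a set" where
  "proj G S H x = {y \<in> H. gdist G S x y = setdist G S x H}"

end

theory Submission
  imports Defs
begin

locale gar = group G for G (structure) +
  fixes M and \<Delta>
  assumes gar: "garside G M \<Delta>"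
begin

lemma sm: "submonoid M G" using gar unfolding garside_def by auto
lemma M_sub: "M \<subseteq> carrier G" using submonoid.subset[OF sm] .
lemma M_carr[intro]: "x \<in> M \<Longrightarrow> x \<in> carrier G" using M_sub by auto
lemma M_one[simp,intro]: "\<one> \<in> M" using submonoid.one_closed[OF sm] .
lemma M_mult[intro,simp]: "x \<in> M \<Longrightarrow> y \<in> M \<Longrightarrow> x \<otimes> y \<in> M" using submonoid.m_closed[OF sm] .
lemma M_anti: "x \<in> M \<Longrightarrow> inv x \<in> M \<Longrightarrow> x = \<one>"
proof -
  assume a: "x \<in> M" "inv x \<in> M"
  have "M \<inter> (\<lambda>x. inv x) ` M = {\<one>}" using gar unfolding garside_def by auto
  moreover have "x = inv (inv x)" using a M_carr by auto
  ultimately show ?thesis using a by blast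
qed
lemma bal: "balanced G M \<Delta>" using gar unfolding garside_def by auto
lemma Mgen: "monoid_gen G (Div G M \<Delta>) = M" using gar unfolding garside_def by auto
lemma Ggen: "generate G (Div G M \<Delta>) = carrier G" using gar unfolding garside_def by auto
lemma lat: "x \<in> carrier G \<Longrightarrow> y \<in> carrier G \<Longrightarrow> (\<exists>m. is_meetL G M x y m) \<and> (\<exists>j. is_joinL G M x y j)"
  using gar unfolding garside_def by auto

abbreviation lL where "lL \<equiv> leL G M"

lemma lL_def: "lL x y \<longleftrightarrow> inv x \<otimes> y \<in> M" by (simp add: leL_def)

lemma lL_refl[simp]: "x \<in> carrier G \<Longrightarrow> lL x x" by (simp add: lL_def)

lemma lL_trans: "x \<in> carrier G \<Longrightarrow> y \<in> carrier G \<Longrightarrow> z \<in> carrier G \<Longrightarrow> lL x y \<Longrightarrow> lL y z \<Longrightarrow> lL x z"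
proof -
  assume c: "x \<in> carrier G" "y \<in> carrier G" "z \<in> carrier G" and h: "lL x y" "lL y z"
  have "(inv x \<otimes> y) \<otimes> (inv y \<otimes> z) \<in> M" using h by (auto simp: lL_def)
  moreover have "(inv x \<otimes> y) \<otimes> (inv y \<otimes> z) = inv x \<otimes> z" using c
    by (simp add: m_assoc[symmetric]) (simp add: m_assoc)
  ultimately show ?thesis by (simp add: lL_def)
qed

lemma lL_antisym: "x \<in> carrier G \<Longrightarrow> y \<in> carrier G \<Longrightarrow> lL x y \<Longrightarrow> lL y x \<Longrightarrow> x = y"
proof -
  assume c: "x \<in> carrier G" "y \<in> carrier G" and h: "lL x y" "lL y x"
  have "inv (inv x \<otimes> y) = inv y \<otimes> x" using c by (simp add: inv_mult_group)
  hence "inv x \<otimes> y = \<one>" using M_anti h by (simp add: lL_def)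
  thus ?thesis using c by (metis inv_equality l_inv_ex inv_inv)
qed

lemma lL_left: "g \<in> carrier G \<Longrightarrow> x \<in> carrier G \<Longrightarrow> y \<in> carrier G \<Longrightarrow> lL (g \<otimes> x) (g \<otimes> y) \<longleftrightarrow> lL x y"
proof -
  assume c: "g \<in> carrier G" "x \<in> carrier G" "y \<in> carrier G"
  have "inv (g \<otimes> x) \<otimes> (g \<otimes> y) = inv x \<otimes> y" using c
    by (simp add: inv_mult_group m_assoc[symmetric]) (simp add: m_assoc)
  thus ?thesis by (simp add: lL_def)
qed

lemma lL_one: "x \<in> carrier G \<Longrightarrow> lL \<one> x \<longleftrightarrow> x \<in> M" by (simp add: lL_def)
lemma lL_one2: "x \<in> carrier G \<Longrightarrow> lL x \<one> \<longleftrightarrow> inv x \<in> M" by (simp add: lL_def)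


lemma lprod_Nil[simp]: "lprod G [] = \<one>" by (simp add: lprod_def)
lemma lprod_Cons[simp]: "lprod G (x#xs) = x \<otimes> lprod G xs" by (simp add: lprod_def)
lemma lprod_carr[intro]: "set xs \<subseteq> carrier G \<Longrightarrow> lprod G xs \<in> carrier G"
  by (induct xs) auto
lemma lprod_append: "set xs \<subseteq> carrier G \<Longrightarrow> set ys \<subseteq> carrier G \<Longrightarrow> lprod G (xs @ ys) = lprod G xs \<otimes> lprod G ys"
proof -
  assume a: "set xs \<subseteq> carrier G" "set ys \<subseteq> carrier G"
  have "lprod G ys \<in> carrier G" using a(2) by auto
  then show ?thesis using a(1) by (induct xs) (auto simp: m_assoc lprod_carr)
qed

lemma lprod_conj: "g \<in> carrier G \<Longrightarrow> set xs \<subseteq> carrier G \<Longrightarrow>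
   lprod G (map (\<lambda>x. inv g \<otimes> x \<otimes> g) xs) = inv g \<otimes> lprod G xs \<otimes> g"
proof (induct xs)
  case Nil then show ?case by simp
next
  case (Cons a xs)
  then have c: "a \<in> carrier G" "lprod G xs \<in> carrier G" by auto
  have "lprod G (map (\<lambda>x. inv g \<otimes> x \<otimes> g) (a#xs)) = (inv g \<otimes> a \<otimes> g) \<otimes> (inv g \<otimes> lprod G xs \<otimes> g)"
    using Cons by simp
  also have "\<dots> = inv g \<otimes> (a \<otimes> lprod G xs) \<otimes> g" using c Cons(2)
    by (simp add: m_assoc[symmetric]) (simp add: m_assoc)
  finally show ?case by simp
qed

lemma mgen_conj: "g \<in> carrier G \<Longrightarrow> Y \<subseteq> carrier G \<Longrightarrow> (\<And>s. s \<in> Y \<Longrightarrow> inv g \<otimes> s \<otimes> g \<in> Y) \<Longrightarrow>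
   x \<in> monoid_gen G Y \<Longrightarrow> inv g \<otimes> x \<otimes> g \<in> monoid_gen G Y"
proof -
  assume g: "g \<in> carrier G" and Y: "Y \<subseteq> carrier G" and cl: "\<And>s. s \<in> Y \<Longrightarrow> inv g \<otimes> s \<otimes> g \<in> Y"
    and x: "x \<in> monoid_gen G Y"
  then obtain xs where xs: "set xs \<subseteq> Y" "x = lprod G xs" unfolding monoid_gen_def by auto
  have "set (map (\<lambda>x. inv g \<otimes> x \<otimes> g) xs) \<subseteq> Y" using xs cl by auto
  moreover have "lprod G (map (\<lambda>x. inv g \<otimes> x \<otimes> g) xs) = inv g \<otimes> x \<otimes> g"
    using lprod_conj[OF g, of xs] xs Y by auto
  ultimately show ?thesis unfolding monoid_gen_def by (metis (mono_tags, lifting) mem_Collect_eq)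
qed

lemma mgen_mult: "Y \<subseteq> carrier G \<Longrightarrow> x \<in> monoid_gen G Y \<Longrightarrow> y \<in> monoid_gen G Y \<Longrightarrow> x \<otimes> y \<in> monoid_gen G Y"
proof -
  assume Y: "Y \<subseteq> carrier G" and "x \<in> monoid_gen G Y" "y \<in> monoid_gen G Y"
  then obtain xs ys where "set xs \<subseteq> Y" "x = lprod G xs" "set ys \<subseteq> Y" "y = lprod G ys"
    unfolding monoid_gen_def by auto
  then show ?thesis unfolding monoid_gen_def using lprod_append[of xs ys] Y
    by (auto intro!: exI[of _ "xs@ys"])
qed

lemma mgen_one: "\<one> \<in> monoid_gen G Y" unfolding monoid_gen_def by (auto intro!: exI[of _ "[]"])
lemma mgen_incl: "Y \<subseteq> carrier G \<Longrightarrow> s \<in> Y \<Longrightarrow> s \<in> monoid_gen G Y"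
  unfolding monoid_gen_def by (auto intro!: exI[of _ "[s]"])

section \<open>Balanced elements\<close>

lemma Div_iff: "s \<in> Div G M d \<longleftrightarrow> s \<in> M \<and> inv s \<otimes> d \<in> M"
  by (simp add: Div_def DivL_def leL_def)

lemma bal_R: "balanced G M d \<Longrightarrow> s \<in> Div G M d \<longleftrightarrow> s \<in> M \<and> d \<otimes> inv s \<in> M"
  by (simp add: balanced_def Div_def DivR_def leR_def)

lemma bal_d: "balanced G M d \<Longrightarrow> d \<in> M" by (simp add: balanced_def)

lemma bal_c1: assumes b: "balanced G M d" and s: "s \<in> Div G M d" shows "inv s \<otimes> d \<in> Div G M d"
proof -
  have c: "s \<in> carrier G" "d \<in> carrier G" using s b bal_d by (auto simp: Div_iff)
  have "d \<otimes> inv (inv s \<otimes> d) = s" using c by (simp add: inv_mult_group m_assoc[symmetric])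
  then show ?thesis using s c bal_R[OF b] by (auto simp: Div_iff)
qed

lemma bal_c2: assumes b: "balanced G M d" and s: "s \<in> Div G M d" shows "d \<otimes> inv s \<in> Div G M d"
proof -
  have c: "s \<in> carrier G" "d \<in> carrier G" using s b bal_d by (auto simp: Div_iff)
  have "inv (d \<otimes> inv s) \<otimes> d = s" using c by (simp add: inv_mult_group m_assoc)
  then show ?thesis using s c bal_R[OF b] by (auto simp: Div_iff)
qed

lemma bal_conj1: assumes b: "balanced G M d" and s: "s \<in> Div G M d" shows "inv d \<otimes> s \<otimes> d \<in> Div G M d"
proof -
  have c: "s \<in> carrier G" "d \<in> carrier G" using s b bal_d by (auto simp: Div_iff)
  have "inv (inv s \<otimes> d) \<otimes> d = inv d \<otimes> s \<otimes> d" using c by (simp add: inv_mult_group)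
  then show ?thesis using bal_c1[OF b bal_c1[OF b s]] by simp
qed

lemma bal_conj2: assumes b: "balanced G M d" and s: "s \<in> Div G M d" shows "d \<otimes> s \<otimes> inv d \<in> Div G M d"
proof -
  have c: "s \<in> carrier G" "d \<in> carrier G" using s b bal_d by (auto simp: Div_iff)
  have "d \<otimes> inv (d \<otimes> inv s) = d \<otimes> s \<otimes> inv d" using c by (simp add: inv_mult_group m_assoc)
  then show ?thesis using bal_c2[OF b bal_c2[OF b s]] by simp
qed

lemma bal_conjk1: assumes b: "balanced G M d" shows "s \<in> Div G M d \<Longrightarrow> inv (d [^] k) \<otimes> s \<otimes> d [^] (k::nat) \<in> Div G M d"
proof (induct k arbitrary: s)
  case 0 then show ?case using M_carr by (auto simp: Div_iff)
next
  case (Suc k)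
  have c: "s \<in> carrier G" "d \<in> carrier G" using Suc b bal_d by (auto simp: Div_iff)
  have "inv (d [^] Suc k) \<otimes> s \<otimes> d [^] Suc k = inv d \<otimes> (inv (d [^] k) \<otimes> s \<otimes> d [^] k) \<otimes> d"
    using c by (simp add: inv_mult_group m_assoc)
  then show ?case using bal_conj1[OF b Suc(1)[OF Suc(2)]] by simp
qed

lemma bal_conjk2: assumes b: "balanced G M d" shows "s \<in> Div G M d \<Longrightarrow> d [^] k \<otimes> s \<otimes> inv (d [^] (k::nat)) \<in> Div G M d"
proof (induct k arbitrary: s)
  case 0 then show ?case using M_carr by (auto simp: Div_iff)
next
  case (Suc k)
  have c: "s \<in> carrier G" "d \<in> carrier G" using Suc b bal_d by (auto simp: Div_iff)
  have "d [^] Suc k \<otimes> s \<otimes> inv (d [^] Suc k) = d [^] k \<otimes> (d \<otimes> s \<otimes> inv d) \<otimes> inv (d [^] k)"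
    using c by (simp add: inv_mult_group m_assoc)
  then show ?case using Suc(1)[OF bal_conj2[OF b Suc(2)]] by simp
qed

lemma Div_sub: "Div G M d \<subseteq> carrier G" using M_carr by (auto simp: Div_iff)

lemma bal_gen_conj1: assumes b: "balanced G M d" and x: "x \<in> monoid_gen G (Div G M d)"
  shows "inv (d [^] k) \<otimes> x \<otimes> d [^] (k::nat) \<in> monoid_gen G (Div G M d)"
  using mgen_conj[of "d [^] k" "Div G M d" x] bal_conjk1[OF b] x Div_sub bal_d[OF b] M_carr by auto

lemma bal_gen_conj2: assumes b: "balanced G M d" and x: "x \<in> monoid_gen G (Div G M d)"
  shows "d [^] k \<otimes> x \<otimes> inv (d [^] (k::nat)) \<in> monoid_gen G (Div G M d)"
proof -
  have c: "d \<in> carrier G" using bal_d[OF b] M_carr by auto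
  have "\<And>s. s \<in> Div G M d \<Longrightarrow> inv (inv (d [^] k)) \<otimes> s \<otimes> inv (d [^] k) \<in> Div G M d"
    using bal_conjk2[OF b] c by simp
  then have "inv (inv (d [^] k)) \<otimes> x \<otimes> inv (d [^] k) \<in> monoid_gen G (Div G M d)"
    using mgen_conj[of "inv (d [^] k)" "Div G M d" x] x Div_sub c by auto
  then show ?thesis using c by simp
qed


section \<open>Powers of Delta and conjugation\<close>

abbreviation D :: "nat \<Rightarrow> 'a" where "D k \<equiv> \<Delta> [^] k"

lemma Delta_M[simp,intro]: "\<Delta> \<in> M" using bal bal_d by auto
lemma Delta_carr[simp,intro]: "\<Delta> \<in> carrier G" using Delta_M M_carr by auto
lemma D_carr[simp,intro]: "D k \<in> carrier G" by simp
lemma D_M[simp,intro]: "D k \<in> M" by (induct k) auto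
lemma D_add: "D (a + b) = D a \<otimes> D b" by (simp add: nat_pow_mult)
lemma D_Suc2: "D (Suc k) = \<Delta> \<otimes> D k" using nat_pow_Suc2 by simp
lemma D_comm: "D a \<otimes> D b = D b \<otimes> D a" using nat_pow_comm by simp

lemma tauM1: "x \<in> M \<Longrightarrow> inv (D k) \<otimes> x \<otimes> D k \<in> M"
  using bal_gen_conj1[OF bal, of x k] Mgen by simp
lemma tauM2: "x \<in> M \<Longrightarrow> D k \<otimes> x \<otimes> inv (D k) \<in> M"
  using bal_gen_conj2[OF bal, of x k] Mgen by simp
lemma tauS1: "s \<in> Div G M \<Delta> \<Longrightarrow> inv (D k) \<otimes> s \<otimes> D k \<in> Div G M \<Delta>"
  using bal_conjk1[OF bal] by simp
lemma tauS2: "s \<in> Div G M \<Delta> \<Longrightarrow> D k \<otimes> s \<otimes> inv (D k) \<in> Div G M \<Delta>"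
  using bal_conjk2[OF bal] by simp

lemma lL_rightD: assumes "x \<in> carrier G" "y \<in> carrier G"
  shows "lL (x \<otimes> D k) (y \<otimes> D k) \<longleftrightarrow> lL x y"
proof -
  have e: "inv (x \<otimes> D k) \<otimes> (y \<otimes> D k) = inv (D k) \<otimes> (inv x \<otimes> y) \<otimes> D k"
    using assms by (simp add: inv_mult_group m_assoc)
  have e2: "D k \<otimes> (inv (D k) \<otimes> (inv x \<otimes> y) \<otimes> D k) \<otimes> inv (D k) = inv x \<otimes> y"
    using assms by (simp add: m_assoc[symmetric]) (simp add: m_assoc)
  show ?thesis unfolding lL_def e using tauM1 tauM2[of "inv (D k) \<otimes> (inv x \<otimes> y) \<otimes> D k" k] e2 by auto
qed

lemma lL_rightDi: assumes "x \<in> carrier G" "y \<in> carrier G"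
  shows "lL (x \<otimes> inv (D k)) (y \<otimes> inv (D k)) \<longleftrightarrow> lL x y"
proof -
  have "lL (x \<otimes> inv (D k)) (y \<otimes> inv (D k)) \<longleftrightarrow> lL (x \<otimes> inv (D k) \<otimes> D k) (y \<otimes> inv (D k) \<otimes> D k)"
    using lL_rightD[of "x \<otimes> inv (D k)" "y \<otimes> inv (D k)" k] assms by simp
  also have "\<dots> \<longleftrightarrow> lL x y" using assms by (simp add: m_assoc)
  finally show ?thesis .
qed

section \<open>Meets and joins\<close>

definition jn where "jn x y = (THE j. is_joinL G M x y j)"
abbreviation mt where "mt x y \<equiv> meetL G M x y"

lemma mt_is: assumes "x \<in> carrier G" "y \<in> carrier G" shows "is_meetL G M x y (mt x y)"
proof -
  obtain m where m: "is_meetL G M x y m" using lat[OF assms] by auto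
  have "\<And>m'. is_meetL G M x y m' \<Longrightarrow> m' = m"
    using m unfolding is_meetL_def by (meson lL_antisym)
  then show ?thesis unfolding meetL_def using m by (metis theI)
qed

lemma jn_is: assumes "x \<in> carrier G" "y \<in> carrier G" shows "is_joinL G M x y (jn x y)"
proof -
  obtain m where m: "is_joinL G M x y m" using lat[OF assms] by auto
  have "\<And>m'. is_joinL G M x y m' \<Longrightarrow> m' = m"
    using m unfolding is_joinL_def by (meson lL_antisym)
  then show ?thesis unfolding jn_def using m by (metis theI)
qed

lemma mt_carr[intro,simp]: "x \<in> carrier G \<Longrightarrow> y \<in> carrier G \<Longrightarrow> mt x y \<in> carrier G"
  using mt_is unfolding is_meetL_def by auto
lemma mt_le1: "x \<in> carrier G \<Longrightarrow> y \<in> carrier G \<Longrightarrow> lL (mt x y) x"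
  using mt_is unfolding is_meetL_def by auto
lemma mt_le2: "x \<in> carrier G \<Longrightarrow> y \<in> carrier G \<Longrightarrow> lL (mt x y) y"
  using mt_is unfolding is_meetL_def by auto
lemma mt_glb: "x \<in> carrier G \<Longrightarrow> y \<in> carrier G \<Longrightarrow> c \<in> carrier G \<Longrightarrow> lL c x \<Longrightarrow> lL c y \<Longrightarrow> lL c (mt x y)"
  using mt_is unfolding is_meetL_def by auto
lemma jn_carr[intro,simp]: "x \<in> carrier G \<Longrightarrow> y \<in> carrier G \<Longrightarrow> jn x y \<in> carrier G"
  using jn_is unfolding is_joinL_def by auto
lemma jn_ge1: "x \<in> carrier G \<Longrightarrow> y \<in> carrier G \<Longrightarrow> lL x (jn x y)"
  using jn_is unfolding is_joinL_def by auto
lemma jn_ge2: "x \<in> carrier G \<Longrightarrow> y \<in> carrier G \<Longrightarrow> lL y (jn x y)"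
  using jn_is unfolding is_joinL_def by auto
lemma jn_lub: "x \<in> carrier G \<Longrightarrow> y \<in> carrier G \<Longrightarrow> c \<in> carrier G \<Longrightarrow> lL x c \<Longrightarrow> lL y c \<Longrightarrow> lL (jn x y) c"
  using jn_is unfolding is_joinL_def by auto

lemma lL_M: "x \<in> M \<Longrightarrow> y \<in> carrier G \<Longrightarrow> lL x y \<Longrightarrow> y \<in> M"
proof -
  assume a: "x \<in> M" "y \<in> carrier G" "lL x y"
  then have "x \<otimes> (inv x \<otimes> y) \<in> M" by (auto simp: lL_def)
  moreover have "x \<otimes> (inv x \<otimes> y) = y" using a M_carr by (simp add: m_assoc[symmetric])
  ultimately show ?thesis by simp
qed

lemma lL_quot: "x \<in> carrier G \<Longrightarrow> y \<in> carrier G \<Longrightarrow> lL x y \<Longrightarrow> inv x \<otimes> y \<in> M" by (simp add: lL_def)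

lemma lL_mult: "x \<in> carrier G \<Longrightarrow> m \<in> M \<Longrightarrow> lL x (x \<otimes> m)"
  by (simp add: lL_def m_assoc[symmetric] M_carr)


lemma canc1[simp]: "x \<in> carrier G \<Longrightarrow> y \<in> carrier G \<Longrightarrow> x \<otimes> (inv x \<otimes> y) = y"
  by (simp add: m_assoc[symmetric])
lemma canc2[simp]: "x \<in> carrier G \<Longrightarrow> y \<in> carrier G \<Longrightarrow> inv x \<otimes> (x \<otimes> y) = y"
  by (simp add: m_assoc[symmetric])

lemma D_comm1: "D k \<otimes> \<Delta> = \<Delta> \<otimes> D k" using D_comm[of k 1] by simp

lemma D_Delta_comm: "D k \<otimes> (\<Delta> \<otimes> y) = \<Delta> \<otimes> (D k \<otimes> y)" if "y \<in> carrier G"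
  using D_comm[of k 1] that by (simp add: m_assoc[symmetric])

lemma lemO:
  assumes a: "a \<in> M" and b: "b \<in> M"
    and cop: "\<And>c. c \<in> carrier G \<Longrightarrow> lL c a \<Longrightarrow> lL c b \<Longrightarrow> lL c \<one>"
    and h: "lL b (a \<otimes> D p)"
  shows "lL b (D p)"
proof -
  have ac: "a \<in> carrier G" and bc: "b \<in> carrier G" using a b by auto
  define j where "j = jn b (D p)"
  have jc: "j \<in> carrier G" using j_def bc by simp
  have "lL (D p) (a \<otimes> D p)" using tauM1[OF a, of p] ac by (simp add: lL_def m_assoc)
  then have j1: "lL j (a \<otimes> D p)" using jn_lub[of b "D p" "a \<otimes> D p"] h bc ac j_def by simp
  have "lL (D p) (b \<otimes> D p)" using tauM1[OF b, of p] bc by (simp add: lL_def m_assoc)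
  moreover have "lL b (b \<otimes> D p)" using lL_mult bc by simp
  ultimately have j2: "lL j (b \<otimes> D p)" using jn_lub[of b "D p" "b \<otimes> D p"] bc j_def by simp
  define c where "c = j \<otimes> inv (D p)"
  have cc: "c \<in> carrier G" using c_def jc by simp
  have cj: "c \<otimes> D p = j" using c_def jc by (simp add: m_assoc)
  have "lL c a" using lL_rightD[OF cc ac, of p] j1 cj by simp
  moreover have "lL c b" using lL_rightD[OF cc bc, of p] j2 cj by simp
  ultimately have c1: "lL c \<one>" using cop cc by simp
  have "lL (D p) j" using jn_ge2 bc j_def by simp
  then have "lL \<one> c" using lL_rightD[OF one_closed cc, of p] cj by simp
  then have "c = \<one>" using c1 lL_antisym cc by simp
  then have "j = D p" using cj by simp
  then show ?thesis using jn_ge1[of b "D p"] bc j_def by simp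
qed

lemma Kstep:
  assumes m: "m \<in> M" and h: "lL m (D (Suc k))"
  shows "mt m \<Delta> \<in> Div G M \<Delta> \<and> inv (mt m \<Delta>) \<otimes> m \<in> M \<and> lL (inv (mt m \<Delta>) \<otimes> m) (D k)"
proof -
  define s where "s = mt m \<Delta>"
  have mc: "m \<in> carrier G" using m by auto
  have sc: "s \<in> carrier G" using s_def mc by simp
  have sm: "lL s m" and sD: "lL s \<Delta>" using mt_le1 mt_le2 mc s_def by auto
  have "lL \<one> s" using mt_glb[of m \<Delta> \<one>] mc s_def m by (simp add: lL_one)
  then have sM: "s \<in> M" using sc by (simp add: lL_one)
  have sS: "s \<in> Div G M \<Delta>" using sM sD sc by (simp add: Div_iff lL_def)
  define m1 where "m1 = inv s \<otimes> m"
  have m1M: "m1 \<in> M" using sm m1_def sc mc by (simp add: lL_def)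
  define a where "a = inv s \<otimes> \<Delta>"
  have aM: "a \<in> M" using sD a_def by (simp add: lL_def)
  have ac: "a \<in> carrier G" using a_def sc by simp
  have m1c: "m1 \<in> carrier G" using m1_def sc mc by simp
  have sa: "s \<otimes> a = \<Delta>" using a_def sc by simp
  have sm1: "s \<otimes> m1 = m" using m1_def sc mc by simp
  have cop: "lL c \<one>" if cc: "c \<in> carrier G" and c1: "lL c a" and c2: "lL c m1" for c
  proof -
    have "lL (s \<otimes> c) \<Delta>" using lL_left[OF sc cc ac] c1 sa by simp
    moreover have "lL (s \<otimes> c) m" using lL_left[OF sc cc m1c] c2 sm1 by simp
    ultimately have "lL (s \<otimes> c) s" using mt_glb[of m \<Delta> "s \<otimes> c"] s_def mc sc cc by simp
    then have "lL (s \<otimes> c) (s \<otimes> \<one>)" using sc by simp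
    then show ?thesis using lL_left[OF sc cc one_closed] by simp
  qed
  have "lL (s \<otimes> m1) (s \<otimes> (a \<otimes> D k))" using sm1 h sa D_Suc2[of k] sc ac by (simp add: m_assoc[symmetric])
  then have "lL m1 (a \<otimes> D k)" using lL_left[OF sc m1c] ac by simp
  then have "lL m1 (D k)" using lemO[OF aM m1M] cop by blast
  then show ?thesis using sS m1M m1_def s_def by simp
qed

lemma simple_step:
  assumes s: "s \<in> Div G M \<Delta>" and y: "y \<in> carrier G" and h: "lL y (D k)"
  shows "lL (s \<otimes> y) (D (Suc k))"
proof -
  have sc: "s \<in> carrier G" and sD: "inv s \<otimes> \<Delta> \<in> M" using s by (auto simp: Div_iff)
  have e: "inv (s \<otimes> y) \<otimes> D (Suc k) = (inv y \<otimes> D k) \<otimes> (inv (D k) \<otimes> (inv s \<otimes> \<Delta>) \<otimes> D k)"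
    using sc y by (simp add: m_assoc inv_mult_group D_Suc2 D_Delta_comm D_comm1)
  show ?thesis unfolding lL_def e using h tauM1[OF sD, of k] by (auto simp: lL_def)
qed

lemma M_bound: "x \<in> M \<Longrightarrow> \<exists>k. lL x (D k)"
proof -
  assume "x \<in> M"
  then obtain xs where xs: "set xs \<subseteq> Div G M \<Delta>" "x = lprod G xs" using Mgen unfolding monoid_gen_def by auto
  have "lL (lprod G xs) (D (length xs))" using xs(1)
  proof (induct xs)
    case Nil then show ?case by simp
  next
    case (Cons a xs)
    then have "lprod G xs \<in> carrier G" using Div_sub by auto
    then show ?case using simple_step[of a "lprod G xs" "length xs"] Cons by simp
  qed
  then show ?thesis using xs by auto
qed

lemma head_one:
  assumes m: "m \<in> M" and h: "\<And>c. c \<in> carrier G \<Longrightarrow> lL c m \<Longrightarrow> lL c \<Delta> \<Longrightarrow> lL c \<one>"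
  shows "m = \<one>"
proof -
  have mc: "m \<in> carrier G" using m by auto
  have "lL (mt m \<Delta>) \<one>" using h mt_le1 mt_le2 mc by simp
  moreover have "lL \<one> (mt m \<Delta>)" using mt_glb[of m \<Delta> \<one>] mc m by (simp add: lL_one)
  ultimately have s1: "mt m \<Delta> = \<one>" using lL_antisym mc by simp
  have "lL m (D k) \<Longrightarrow> lL m (D 0)" for k
  proof (induct k)
    case 0 then show ?case by simp
  next
    case (Suc k)
    then show ?case using Kstep[OF m Suc(2)] s1 mc by simp
  qed
  then have "lL m \<one>" using M_bound[OF m] by auto
  then have "inv m \<in> M" using mc by (simp add: lL_one2)
  then show ?thesis using m M_anti by blast
qed


section \<open>Word length\<close>

abbreviation SS where "SS \<equiv> Div G M \<Delta> - {\<one>}"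

lemma SS_sub: "SS \<union> (\<lambda>x. inv x) ` SS \<subseteq> carrier G" using Div_sub by auto

lemma tau1: "x \<in> M \<Longrightarrow> inv \<Delta> \<otimes> x \<otimes> \<Delta> \<in> M" using tauM1[of x 1] by simp

lemma LB_word: "set xs \<subseteq> SS \<union> (\<lambda>x. inv x) ` SS \<Longrightarrow>
  \<exists>P Q. P + Q = length xs \<and> lL (lprod G xs) (D P) \<and> lL (inv (lprod G xs)) (D Q)"
proof (induct xs)
  case Nil then show ?case by (auto simp: lL_def)
next
  case (Cons a xs)
  then obtain P Q where PQ: "P + Q = length xs" "lL (lprod G xs) (D P)" "lL (inv (lprod G xs)) (D Q)" by auto
  define y where "y = lprod G xs"
  have yc: "y \<in> carrier G" unfolding y_def using Cons(2) SS_sub by (intro lprod_carr) auto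
  have yQ: "y \<otimes> D Q \<in> M" using PQ(3) yc y_def by (simp add: lL_def)
  have yP: "inv y \<otimes> D P \<in> M" using PQ(2) y_def by (simp add: lL_def)
  show ?case
  proof (cases "a \<in> SS")
    case True
    then have aS: "a \<in> Div G M \<Delta>" and ac: "a \<in> carrier G" and aM: "a \<in> M" using Div_sub by (auto simp: Div_iff)
    have 1: "lL (a \<otimes> y) (D (Suc P))" using simple_step[OF aS yc] PQ(2) y_def by simp
    have "inv (inv (a \<otimes> y)) \<otimes> D Q = a \<otimes> (y \<otimes> D Q)" using ac yc by (simp add: m_assoc)
    then have 2: "lL (inv (a \<otimes> y)) (D Q)" using yQ aM by (simp add: lL_def)
    show ?thesis using 1 2 PQ(1) y_def by (intro exI[of _ "Suc P"] exI[of _ Q]) simp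
  next
    case False
    then obtain s where s: "s \<in> SS" "a = inv s" using Cons(2) by auto
    then have sS: "s \<in> Div G M \<Delta>" and sc: "s \<in> carrier G" and sM: "s \<in> M" and sD: "inv s \<otimes> \<Delta> \<in> M"
      using Div_sub by (auto simp: Div_iff)
    have "inv (inv s \<otimes> y) \<otimes> D P = (inv y \<otimes> D P) \<otimes> (inv (D P) \<otimes> s \<otimes> D P)"
      using sc yc by (simp add: m_assoc inv_mult_group)
    then have 1: "lL (inv s \<otimes> y) (D P)" using yP tauM1[OF sM, of P] by (simp add: lL_def)
    have "inv (inv (inv s \<otimes> y)) \<otimes> D (Suc Q) = (inv s \<otimes> \<Delta>) \<otimes> (inv \<Delta> \<otimes> (y \<otimes> D Q) \<otimes> \<Delta>)"
      using sc yc by (simp add: m_assoc inv_mult_group)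
    then have 2: "lL (inv (inv s \<otimes> y)) (D (Suc Q))" using yQ sD tau1[OF yQ] by (simp add: lL_def)
    show ?thesis using 1 2 PQ(1) y_def s by (intro exI[of _ P] exI[of _ "Suc Q"]) simp
  qed
qed

lemma UB_word: "\<And>z P Q. z \<in> carrier G \<Longrightarrow> P + Q \<le> n \<Longrightarrow> lL z (D P) \<Longrightarrow> lL (inv z) (D Q) \<Longrightarrow>
  \<exists>xs. length xs \<le> n \<and> set xs \<subseteq> SS \<union> (\<lambda>x. inv x) ` SS \<and> lprod G xs = z"
proof (induct n)
  case 0
  then have "inv z \<in> M" "z \<in> M" by (auto simp: lL_def)
  then have "z = \<one>" using M_anti by blast
  then show ?case by (intro exI[of _ "[]"]) simp
next
  case (Suc n)
  show ?case
  proof (cases "P + Q \<le> n")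
    case True
    then obtain xs where "length xs \<le> n \<and> set xs \<subseteq> SS \<union> (\<lambda>x. inv x) ` SS \<and> lprod G xs = z"
      using Suc(1)[OF Suc(2) True Suc(4) Suc(5)] by blast
    then show ?thesis by (intro exI[of _ xs]) auto
  next
    case False
    then have PQ: "P + Q = Suc n" using Suc(3) by simp
    have zc: "z \<in> carrier G" using Suc(2) .
    show ?thesis
    proof (cases Q)
      case 0
      then have zM: "z \<in> M" using Suc(5) zc by (simp add: lL_def)
      have "lL z (D (Suc n))" using Suc(4) PQ 0 by simp
      note K = Kstep[OF zM this]
      define s where "s = mt z \<Delta>"
      define z1 where "z1 = inv s \<otimes> z"
      have sS: "s \<in> Div G M \<Delta>" and z1M: "z1 \<in> M" and z1n: "lL z1 (D n)" using K s_def z1_def by auto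
      have sc: "s \<in> carrier G" and z1c: "z1 \<in> carrier G" using sS z1M Div_sub by auto
      have "lL (inv z1) (D 0)" using z1M z1c by (simp add: lL_def)
      then obtain xs where xs: "length xs \<le> n" "set xs \<subseteq> SS \<union> (\<lambda>x. inv x) ` SS" "lprod G xs = z1"
        using Suc(1)[OF z1c _ z1n, of 0] by auto
      have zz: "z = s \<otimes> z1" using z1_def sc zc by simp
      show ?thesis
      proof (cases "s = \<one>")
        case True then show ?thesis using xs zz z1c by (intro exI[of _ xs]) simp
      next
        case False then show ?thesis using xs zz sS by (intro exI[of _ "s # xs"]) auto
      qed
    next
      case (Suc Q')
      note IH = Suc.hyps
      have Qs: "Q = Suc Q'" using Suc .
      have zQ: "z \<otimes> D Q \<in> M" using Suc.prems(4) zc by (simp add: lL_def)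
      define m where "m = D Q \<otimes> z"
      have "D Q \<otimes> (z \<otimes> D Q) \<otimes> inv (D Q) = m" using m_def zc by (simp add: m_assoc)
      then have mM: "m \<in> M" using tauM2[OF zQ, of Q] by simp
      have mc: "m \<in> carrier G" using mM by auto
      have "lL (D Q \<otimes> z) (D Q \<otimes> D P)" using lL_left[of "D Q" z "D P"] zc Suc.prems(3) by simp
      then have "lL m (D (Suc (Q' + P)))" using m_def D_add[of Q P] Qs by simp
      note K = Kstep[OF mM this]
      define s where "s = mt m \<Delta>"
      define m1 where "m1 = inv s \<otimes> m"
      have sS: "s \<in> Div G M \<Delta>" and m1M: "m1 \<in> M" and m1n: "lL m1 (D (Q' + P))" using K s_def m1_def by auto
      have sc: "s \<in> carrier G" and m1c: "m1 \<in> carrier G" using sS m1M Div_sub by auto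
      define s' where "s' = inv (D Q') \<otimes> s \<otimes> D Q'"
      have s'S: "s' \<in> Div G M \<Delta>" using tauS1[OF sS] s'_def by simp
      have s'c: "s' \<in> carrier G" using s'_def sc by simp
      define t where "t = inv s' \<otimes> \<Delta>"
      have tS: "t \<in> Div G M \<Delta>" using bal_c1[OF bal s'S] t_def by simp
      have tc: "t \<in> carrier G" using t_def s'c by simp
      define z' where "z' = inv (D Q') \<otimes> m1"
      have z'c: "z' \<in> carrier G" using z'_def m1c by simp
      have "inv t \<otimes> z' = inv (D Q' \<otimes> \<Delta>) \<otimes> (s \<otimes> m1)"
        using t_def s'_def z'_def sc m1c by (simp add: m_assoc inv_mult_group)
      also have "\<dots> = z" using Qs m_def m1_def sc mc zc by simp
      finally have zz: "z = inv t \<otimes> z'" by simp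
      have "inv z' \<otimes> D P = inv m1 \<otimes> D (Q' + P)" using z'_def m1c by (simp add: m_assoc inv_mult_group D_add)
      then have c1: "lL z' (D P)" using m1n m1c by (simp add: lL_def)
      have "inv (inv z') \<otimes> D Q' = inv (D Q') \<otimes> m1 \<otimes> D Q'" using z'_def m1c by simp
      then have c2: "lL (inv z') (D Q')" using tauM1[OF m1M, of Q'] by (simp add: lL_def)
      have "P + Q' \<le> n" using PQ Qs by simp
      then obtain xs where xs: "length xs \<le> n" "set xs \<subseteq> SS \<union> (\<lambda>x. inv x) ` SS" "lprod G xs = z'"
        using IH[OF z'c _ c1 c2] by auto
      show ?thesis
      proof (cases "t = \<one>")
        case True then show ?thesis using xs zz z'c by (intro exI[of _ xs]) simp
      next
        case False then show ?thesis using xs zz tS by (intro exI[of _ "inv t # xs"]) auto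
      qed
    qed
  qed
qed

lemma word_ex: "z \<in> carrier G \<Longrightarrow> \<exists>xs. set xs \<subseteq> SS \<union> (\<lambda>x. inv x) ` SS \<and> lprod G xs = z"
proof -
  assume "z \<in> carrier G"
  then have "z \<in> generate G (Div G M \<Delta>)" using Ggen by simp
  then show ?thesis
  proof (induct rule: generate.induct)
    case one then show ?case by (intro exI[of _ "[]"]) simp
  next
    case (incl h) then show ?case
      by (cases "h = \<one>") (auto intro: exI[of _ "[]"] exI[of _ "[h]"] simp: Div_sub[THEN subsetD])
  next
    case (inv h) then show ?case
      by (cases "h = \<one>") (auto intro: exI[of _ "[]"] exI[of _ "[inv h]"] simp: Div_sub[THEN subsetD])
  next
    case (eng h1 h2)
    then obtain xs ys where "set xs \<subseteq> SS \<union> (\<lambda>x. inv x) ` SS" "lprod G xs = h1"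
      "set ys \<subseteq> SS \<union> (\<lambda>x. inv x) ` SS" "lprod G ys = h2" by auto
    moreover have "SS \<union> (\<lambda>x. inv x) ` SS \<subseteq> carrier G" using Div_sub by auto
    ultimately show ?case using lprod_append[of xs ys] by (intro exI[of _ "xs @ ys"]) auto
  qed
qed

lemma wlen_le: "z \<in> carrier G \<Longrightarrow> lL z (D P) \<Longrightarrow> lL (inv z) (D Q) \<Longrightarrow> wlen G SS z \<le> P + Q"
proof -
  assume a: "z \<in> carrier G" "lL z (D P)" "lL (inv z) (D Q)"
  obtain xs where xs: "length xs \<le> P + Q" "set xs \<subseteq> SS \<union> (\<lambda>x. inv x) ` SS" "lprod G xs = z"
    using UB_word[OF a(1) _ a(2) a(3)] by auto
  have "wlen G SS z \<le> length xs" unfolding wlen_def using xs by (intro Least_le) auto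
  then show ?thesis using xs by simp
qed

lemma wlen_ge: "z \<in> carrier G \<Longrightarrow> \<exists>P Q. P + Q = wlen G SS z \<and> lL z (D P) \<and> lL (inv z) (D Q)"
proof -
  assume a: "z \<in> carrier G"
  obtain xs where xs: "set xs \<subseteq> SS \<union> (\<lambda>x. inv x) ` SS \<and> lprod G xs = z" using word_ex[OF a] by auto
  define Pr where "Pr = (\<lambda>n. \<exists>xs. length xs = n \<and> set xs \<subseteq> SS \<union> (\<lambda>x. inv x) ` SS \<and> lprod G xs = z)"
  have "Pr (length xs)" using xs Pr_def by auto
  then have "Pr (LEAST n. Pr n)" by (rule LeastI)
  moreover have "wlen G SS z = (LEAST n. Pr n)" unfolding wlen_def Pr_def by simp
  ultimately have "\<exists>xs. length xs = wlen G SS z \<and> set xs \<subseteq> SS \<union> (\<lambda>x. inv x) ` SS \<and> lprod G xs = z"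
    unfolding Pr_def by simp
  then obtain ys where "length ys = wlen G SS z" "set ys \<subseteq> SS \<union> (\<lambda>x. inv x) ` SS" "lprod G ys = z" by auto
  then show ?thesis using LB_word[of ys] by auto
qed


lemma wlen_inv: assumes z: "z \<in> carrier G" shows "wlen G SS (inv z) = wlen G SS z"
proof -
  obtain P Q where a: "P + Q = wlen G SS z" "lL z (D P)" "lL (inv z) (D Q)" using wlen_ge[OF z] by auto
  have "wlen G SS (inv z) \<le> Q + P" using wlen_le[of "inv z" Q P] a z by simp
  moreover obtain P' Q' where b: "P' + Q' = wlen G SS (inv z)" "lL (inv z) (D P')" "lL (inv (inv z)) (D Q')"
    using wlen_ge[of "inv z"] z by auto
  have "wlen G SS z \<le> Q' + P'" using wlen_le[of z Q' P'] b z by simp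
  ultimately show ?thesis using a b by simp
qed

lemma lL_prefix_D: assumes b: "b \<in> M" and t: "t \<in> carrier G" and h: "lL (b \<otimes> t) (D P)"
  shows "lL t (D P)"
proof -
  have bc: "b \<in> carrier G" using b by auto
  have "inv t \<otimes> D P = (inv (b \<otimes> t) \<otimes> D P) \<otimes> (inv (D P) \<otimes> b \<otimes> D P)"
    using bc t by (simp add: m_assoc inv_mult_group)
  then show ?thesis using h tauM1[OF b, of P] by (simp add: lL_def)
qed

lemma lL_suffix_simple: assumes u: "u \<in> Div G M \<Delta>" and y: "y \<in> carrier G" and h: "lL y (D m)"
  shows "lL (y \<otimes> u) (D (Suc m))"
proof -
  have uc: "u \<in> carrier G" and uD: "inv u \<otimes> \<Delta> \<in> M" using u by (auto simp: Div_iff)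
  have "inv (y \<otimes> u) \<otimes> D (Suc m) = (inv u \<otimes> \<Delta>) \<otimes> (inv \<Delta> \<otimes> (inv y \<otimes> D m) \<otimes> \<Delta>)"
    using uc y by (simp add: m_assoc inv_mult_group)
  then show ?thesis using h uD tau1[of "inv y \<otimes> D m"] by (simp add: lL_def)
qed

lemma D_mono: "j \<le> k \<Longrightarrow> lL (D j) (D k)"
proof -
  assume "j \<le> k"
  then obtain e where "k = j + e" by (metis le_add_diff_inverse)
  then show ?thesis by (simp add: lL_def D_add m_assoc[symmetric])
qed

end

locale para = gar +
  fixes H N \<delta>
  assumes par: "parabolic G M \<Delta> H N \<delta>"
begin

lemma par_all: "balanced G M \<delta> \<and> H = generate G (Div G M \<delta>) \<and> N = monoid_gen G (Div G M \<delta>) \<and>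
     Div G M \<delta> = Div G M \<Delta> \<inter> N \<and> H \<noteq> {\<one>}"
  by (fact par[unfolded parabolic_def])
lemma bald: "balanced G M \<delta>" using par_all by (rule conjunct1)
lemma Hdef: "H = generate G (Div G M \<delta>)" using par_all[THEN conjunct2] by (rule conjunct1)
lemma Ndef: "N = monoid_gen G (Div G M \<delta>)" using par_all[THEN conjunct2, THEN conjunct2] by (rule conjunct1)
lemma DivEq: "Div G M \<delta> = Div G M \<Delta> \<inter> N" using par_all[THEN conjunct2, THEN conjunct2, THEN conjunct2] by (rule conjunct1)

lemma delta_M[simp,intro]: "\<delta> \<in> M" using bal_d[OF bald] .
lemma delta_carr[simp,intro]: "\<delta> \<in> carrier G" using delta_M M_carr by blast

lemma DS_M: "s \<in> Div G M \<delta> \<Longrightarrow> s \<in> M" by (simp add: Div_iff)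
lemma DS_le: "s \<in> Div G M \<delta> \<Longrightarrow> lL s \<delta>" by (simp add: Div_iff lL_def)
lemma DS_N: "s \<in> Div G M \<delta> \<Longrightarrow> s \<in> N" using DivEq by auto
lemma DS_S: "s \<in> Div G M \<delta> \<Longrightarrow> s \<in> Div G M \<Delta>" using DivEq by auto
lemma DS_intro: "s \<in> M \<Longrightarrow> lL s \<delta> \<Longrightarrow> s \<in> Div G M \<delta>" by (simp add: Div_iff lL_def)
lemma DS_carr: "s \<in> Div G M \<delta> \<Longrightarrow> s \<in> carrier G" using DS_M M_carr by blast

lemma N_M: "n \<in> N \<Longrightarrow> n \<in> M"
proof -
  assume "n \<in> N"
  then obtain xs where "set xs \<subseteq> Div G M \<delta>" "n = lprod G xs" using Ndef unfolding monoid_gen_def by auto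
  then have "set xs \<subseteq> Div G M \<Delta>" "n = lprod G xs" using DivEq by auto
  then show ?thesis using Mgen unfolding monoid_gen_def by auto
qed
lemma N_carr: "n \<in> N \<Longrightarrow> n \<in> carrier G" using N_M M_carr by blast
lemma N_mult: "x \<in> N \<Longrightarrow> y \<in> N \<Longrightarrow> x \<otimes> y \<in> N" using mgen_mult[of "Div G M \<delta>"] Div_sub Ndef by auto
lemma N_one: "\<one> \<in> N" using mgen_one Ndef by simp
lemma delta_S: "\<delta> \<in> Div G M \<delta>" using DS_intro by simp
lemma delta_N: "\<delta> \<in> N" using DS_N delta_S by simp

abbreviation E :: "nat \<Rightarrow> 'a" where "E k \<equiv> \<delta> [^] k"

lemma E_N: "E k \<in> N" by (induct k) (auto simp: N_one N_mult delta_N)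
lemma E_carr[simp,intro]: "E k \<in> carrier G" by simp

lemma E_Suc2: "E (Suc k) = \<delta> \<otimes> E k" using nat_pow_Suc2 by simp
lemma E_comm1: "E k \<otimes> \<delta> = \<delta> \<otimes> E k" using nat_pow_comm[of \<delta> k 1] by simp
lemma E_delta_comm: "E k \<otimes> (\<delta> \<otimes> y) = \<delta> \<otimes> (E k \<otimes> y)" if "y \<in> carrier G"
  using E_comm1[of k] that by (simp add: m_assoc[symmetric])

lemma N_bound: "n \<in> N \<Longrightarrow> \<exists>k. lL n (E k)"
proof -
  assume "n \<in> N"
  then obtain xs where xs: "set xs \<subseteq> Div G M \<delta>" "n = lprod G xs" using Ndef unfolding monoid_gen_def by auto
  have "lL (lprod G xs) (E (length xs))" using xs(1)
  proof (induct xs)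
    case Nil then show ?case by simp
  next
    case (Cons s xs)
    define y where "y = lprod G xs"
    have yc: "y \<in> carrier G" unfolding y_def using Cons(2) Div_sub by (intro lprod_carr) auto
    have sS: "s \<in> Div G M \<delta>" using Cons by simp
    have sc: "s \<in> carrier G" using sS DS_carr by simp
    have IH: "lL y (E (length xs))" using Cons y_def by simp
    have t: "inv s \<otimes> \<delta> \<in> Div G M \<delta>" using bal_c1[OF bald sS] .
    have e1: "(inv y \<otimes> E (length xs)) \<otimes> (inv (E (length xs)) \<otimes> (inv s \<otimes> \<delta>) \<otimes> E (length xs)) = inv y \<otimes> (inv s \<otimes> (\<delta> \<otimes> E (length xs)))"
      using sc yc by (simp add: m_assoc)
    have e2: "inv (s \<otimes> y) \<otimes> E (Suc (length xs)) = inv y \<otimes> (inv s \<otimes> (\<delta> \<otimes> E (length xs)))"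
      using sc yc by (simp only: E_Suc2) (simp add: inv_mult_group m_assoc)
    have e: "inv (s \<otimes> y) \<otimes> E (Suc (length xs)) = (inv y \<otimes> E (length xs)) \<otimes> (inv (E (length xs)) \<otimes> (inv s \<otimes> \<delta>) \<otimes> E (length xs))"
      using e1 e2 by simp
    have "inv (E (length xs)) \<otimes> (inv s \<otimes> \<delta>) \<otimes> E (length xs) \<in> M"
      using bal_conjk1[OF bald t, of "length xs"] DS_M by simp
    then have "inv (s \<otimes> y) \<otimes> E (Suc (length xs)) \<in> M" unfolding e using IH by (simp add: lL_def)
    then show ?case unfolding lL_def lprod_Cons length_Cons y_def[symmetric] .
  qed
  then show ?thesis using xs by auto
qed

lemma E_mono: "j \<le> k \<Longrightarrow> lL (E j) (E k)"
proof -
  assume "j \<le> k"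
  then obtain e where "k = j + e" by (metis le_add_diff_inverse)
  moreover have "E e \<in> M" using E_N N_M by simp
  ultimately show ?thesis by (simp add: lL_def nat_pow_mult[symmetric] m_assoc[symmetric])
qed


lemma N_list: "n \<in> N \<Longrightarrow> \<exists>xs. set xs \<subseteq> Div G M \<delta> \<and> n = lprod G xs"
  using Ndef unfolding monoid_gen_def by auto

lemma lprod_N: "set xs \<subseteq> Div G M \<delta> \<Longrightarrow> lprod G xs \<in> N"
  using Ndef unfolding monoid_gen_def by auto

lemma DS_le_Delta: "s \<in> Div G M \<Delta> \<Longrightarrow> lL s \<Delta>" by (simp add: Div_iff lL_def)

lemma headN: "set xs \<subseteq> Div G M \<delta> \<Longrightarrow> c \<in> carrier G \<Longrightarrow> lL c (lprod G xs) \<Longrightarrow> lL c \<Delta> \<Longrightarrow> lL c \<delta>"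
proof (induct xs arbitrary: c)
  case Nil
  then have "lL c \<one>" by simp
  moreover have "lL \<one> \<delta>" by (simp add: lL_one)
  ultimately show ?case using lL_trans Nil by blast
next
  case (Cons s xs)
  define n' where "n' = lprod G xs"
  have sS: "s \<in> Div G M \<delta>" using Cons by simp
  have sc: "s \<in> carrier G" using DS_carr sS by simp
  have sM: "s \<in> M" using DS_M sS by simp
  have n'N: "n' \<in> N" using lprod_N Cons(2) n'_def by simp
  have n'c: "n' \<in> carrier G" using N_carr n'N by simp
  have n'M: "n' \<in> M" using N_M n'N by simp
  have cc: "c \<in> carrier G" using Cons by simp
  define j where "j = jn s c"
  have jc: "j \<in> carrier G" using j_def sc cc by simp
  have "lL s (s \<otimes> n')" using lL_mult sc n'M by simp
  moreover have "lL c (s \<otimes> n')" using Cons(4) n'_def by simp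
  ultimately have j1: "lL j (s \<otimes> n')" using jn_lub[of s c] j_def sc cc n'c by simp
  have "lL s (s \<otimes> \<Delta>)" using lL_mult sc by simp
  moreover have "lL \<Delta> (s \<otimes> \<Delta>)" using tau1[OF sM] sc by (simp add: lL_def m_assoc)
  then have "lL c (s \<otimes> \<Delta>)" using lL_trans[of c \<Delta> "s \<otimes> \<Delta>"] Cons(5) cc sc by simp
  ultimately have j2: "lL j (s \<otimes> \<Delta>)" using jn_lub[of s c] j_def sc cc by simp
  define w where "w = inv s \<otimes> j"
  have wc: "w \<in> carrier G" using w_def sc jc by simp
  have sw: "s \<otimes> w = j" using w_def sc jc by simp
  have "lL w n'" using lL_left[OF sc wc n'c] j1 sw by simp
  moreover have "lL w \<Delta>" using lL_left[OF sc wc Delta_carr] j2 sw by simp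
  ultimately have "lL w \<delta>" using Cons(1)[OF _ wc] Cons(2) n'_def by simp
  moreover have "w \<in> M" using jn_ge1[of s c] sc cc j_def w_def by (simp add: lL_def)
  ultimately have wS: "w \<in> Div G M \<delta>" using DS_intro by simp
  have jN: "j \<in> N" using N_mult[OF DS_N[OF sS] DS_N[OF wS]] sw by simp
  have jM: "j \<in> M" using N_M jN by simp
  have "lL s \<Delta>" using DS_le_Delta DS_S sS by simp
  then have "lL j \<Delta>" using jn_lub[of s c \<Delta>] j_def sc cc Cons(5) by simp
  then have "j \<in> Div G M \<Delta>" using jM by (simp add: Div_iff lL_def)
  then have "j \<in> Div G M \<delta>" using DivEq jN by simp
  then have "lL j \<delta>" using DS_le by simp
  moreover have "lL c j" using jn_ge2[of s c] sc cc j_def by simp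
  ultimately show ?case using lL_trans[of c j \<delta>] cc jc by simp
qed

lemma headN': "n \<in> N \<Longrightarrow> c \<in> carrier G \<Longrightarrow> lL c n \<Longrightarrow> lL c \<Delta> \<Longrightarrow> lL c \<delta>"
  using headN N_list by blast

lemma quot_S: assumes t: "t \<in> Div G M \<delta>" and r: "r \<in> M" and tr: "lL t r" and rd: "lL r \<delta>"
  shows "inv t \<otimes> r \<in> Div G M \<delta>"
proof -
  have tc: "t \<in> carrier G" and rc: "r \<in> carrier G" using t r DS_carr by auto
  have rM: "inv t \<otimes> r \<in> M" using tr by (simp add: lL_def)
  have "lL (t \<otimes> (inv t \<otimes> r)) (t \<otimes> (inv t \<otimes> \<delta>))" using rd tc rc by simp
  then have 1: "lL (inv t \<otimes> r) (inv t \<otimes> \<delta>)" using lL_left tc rc by simp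
  have "inv (inv t \<otimes> \<delta>) \<otimes> \<delta> = inv \<delta> \<otimes> t \<otimes> \<delta>" using tc by (simp add: inv_mult_group)
  then have 2: "lL (inv t \<otimes> \<delta>) \<delta>" using bal_conj1[OF bald t] DS_M by (simp add: lL_def)
  have "lL (inv t \<otimes> r) \<delta>" using lL_trans[OF _ _ _ 1 2] tc rc by simp
  then show ?thesis using rM DS_intro by simp
qed

lemma N2s_aux: "set ts \<subseteq> Div G M \<delta> \<Longrightarrow> s \<in> Div G M \<delta> \<Longrightarrow> x \<in> M \<Longrightarrow> s \<otimes> x = lprod G ts \<Longrightarrow> x \<in> N"
proof (induct ts arbitrary: s x)
  case Nil
  then have sc: "s \<in> carrier G" and xc: "x \<in> carrier G" using DS_carr M_carr by auto
  have "inv x = s" using Nil sc xc inv_equality[of s x] by simp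
  then have "x = \<one>" using M_anti Nil DS_M by metis
  then show ?case using N_one by simp
next
  case (Cons t ts)
  define n' where "n' = lprod G ts"
  have tS: "t \<in> Div G M \<delta>" and sS: "s \<in> Div G M \<delta>" using Cons by auto
  have tc: "t \<in> carrier G" and sc: "s \<in> carrier G" using tS sS DS_carr by auto
  have xc: "x \<in> carrier G" using Cons M_carr by auto
  have n'N: "n' \<in> N" using lprod_N Cons(2) n'_def by simp
  have n'c: "n' \<in> carrier G" and n'M: "n' \<in> M" using N_carr N_M n'N by auto
  have eq: "s \<otimes> x = t \<otimes> n'" using Cons n'_def by simp
  define r where "r = jn s t"
  have rc: "r \<in> carrier G" using r_def sc tc by simp
  have rd: "lL r \<delta>" using jn_lub[of s t \<delta>] sc tc DS_le sS tS r_def by simp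
  have sr: "lL s r" and tr: "lL t r" using jn_ge1 jn_ge2 sc tc r_def by auto
  have rM: "r \<in> M" using lL_M[OF DS_M[OF sS] rc sr] .
  have "lL s (s \<otimes> x)" using lL_mult sc Cons(4) by simp
  moreover have "lL t (s \<otimes> x)" using eq lL_mult tc n'M by simp
  ultimately have rn: "lL r (t \<otimes> n')" using jn_lub[of s t] sc tc eq r_def xc n'c by simp
  define r' where "r' = inv t \<otimes> r"
  have r'S: "r' \<in> Div G M \<delta>" using quot_S[OF tS rM tr rd] r'_def by simp
  have r'c: "r' \<in> carrier G" using r'_def tc rc by simp
  have "lL (t \<otimes> r') (t \<otimes> n')" using rn r'_def tc rc by simp
  then have "lL r' n'" using lL_left tc r'c n'c by simp
  then have n''M: "inv r' \<otimes> n' \<in> M" by (simp add: lL_def)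
  have "r' \<otimes> (inv r' \<otimes> n') = lprod G ts" using r'c n'c n'_def by simp
  then have n''N: "inv r' \<otimes> n' \<in> N" using Cons(1)[OF _ r'S n''M] Cons(2) by simp
  define r'' where "r'' = inv s \<otimes> r"
  have r''S: "r'' \<in> Div G M \<delta>" using quot_S[OF sS rM sr rd] r''_def by simp
  have r''c: "r'' \<in> carrier G" using r''_def sc rc by simp
  have tr': "t \<otimes> r' = r" using r'_def tc rc by simp
  have sr'': "s \<otimes> r'' = r" using r''_def sc rc by simp
  have "s \<otimes> (r'' \<otimes> (inv r' \<otimes> n')) = r \<otimes> (inv r' \<otimes> n')"
    using sr''[symmetric] sc r''c r'c n'c by (simp add: m_assoc)
  also have "\<dots> = t \<otimes> n'" using tr'[symmetric] tc r'c n'c by (simp add: m_assoc)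
  finally have "s \<otimes> x = s \<otimes> (r'' \<otimes> (inv r' \<otimes> n'))" using eq by simp
  then have "x = r'' \<otimes> (inv r' \<otimes> n')" using sc xc r''c r'c n'c by (metis l_cancel m_closed inv_closed)
  then show ?case using N_mult[OF DS_N[OF r''S] n''N] by simp
qed

lemma N2s: "s \<in> Div G M \<delta> \<Longrightarrow> x \<in> M \<Longrightarrow> s \<otimes> x \<in> N \<Longrightarrow> x \<in> N"
  using N2s_aux N_list by metis

lemma N2_aux: "set cs \<subseteq> Div G M \<delta> \<Longrightarrow> x \<in> M \<Longrightarrow> lprod G cs \<otimes> x \<in> N \<Longrightarrow> x \<in> N"
proof (induct cs)
  case Nil then show ?case using M_carr by simp
next
  case (Cons c cs)
  have cc: "c \<in> carrier G" using Cons DS_carr by simp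
  have "lprod G cs \<in> M" using Cons(2) lprod_N N_M by simp
  then have m: "lprod G cs \<otimes> x \<in> M" using Cons by simp
  have lc: "lprod G cs \<in> carrier G" using Cons(2) Div_sub by (intro lprod_carr) auto
  have xc: "x \<in> carrier G" using Cons(3) M_carr by simp
  have "c \<otimes> (lprod G cs \<otimes> x) \<in> N" using Cons(4) cc lc xc by (simp add: m_assoc)
  moreover have cS: "c \<in> Div G M \<delta>" using Cons(2) by simp
  ultimately have "lprod G cs \<otimes> x \<in> N" using N2s[OF cS m] by simp
  then show ?case using Cons by simp
qed

lemma N2: "c \<in> N \<Longrightarrow> x \<in> M \<Longrightarrow> c \<otimes> x \<in> N \<Longrightarrow> x \<in> N"
  using N2_aux N_list by metis

lemma N1_aux: "a \<in> M \<Longrightarrow> lL a (D k) \<Longrightarrow> n \<in> N \<Longrightarrow> lL a n \<Longrightarrow> a \<in> N"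
proof (induct k arbitrary: a n)
  case 0
  then have "inv a \<in> M" using M_carr by (simp add: lL_def)
  then have "a = \<one>" using M_anti 0 by blast
  then show ?case using N_one by simp
next
  case (Suc k)
  note K = Kstep[OF Suc(2) Suc(3)]
  define s where "s = mt a \<Delta>"
  have ac: "a \<in> carrier G" and nc: "n \<in> carrier G" using Suc N_carr M_carr by auto
  have sc: "s \<in> carrier G" using s_def ac by simp
  have sa: "lL s a" and sD: "lL s \<Delta>" using mt_le1 mt_le2 ac s_def by auto
  have sn: "lL s n" using lL_trans[OF sc ac nc sa Suc(5)] .
  have "lL s \<delta>" using headN'[OF Suc(4) sc sn sD] .
  then have sS: "s \<in> Div G M \<delta>" using K s_def DS_intro by (simp add: Div_iff)
  have qM: "inv s \<otimes> n \<in> M" using sn by (simp add: lL_def)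
  have "s \<otimes> (inv s \<otimes> n) \<in> N" using sc nc Suc(4) by simp
  then have qN: "inv s \<otimes> n \<in> N" using N2s[OF sS qM] by simp
  define a1 where "a1 = inv s \<otimes> a"
  have a1c: "a1 \<in> carrier G" using a1_def sc ac by simp
  have "lL (s \<otimes> a1) (s \<otimes> (inv s \<otimes> n))" using a1_def sc ac nc Suc(5) by simp
  then have "lL a1 (inv s \<otimes> n)" using lL_left[of s a1 "inv s \<otimes> n"] sc a1c nc by simp
  then have "a1 \<in> N" using Suc(1)[of a1 "inv s \<otimes> n"] K s_def a1_def qN by simp
  moreover have "a = s \<otimes> a1" using a1_def sc ac by simp
  ultimately show ?case using N_mult DS_N[OF sS] by simp
qed

lemma N1: "a \<in> M \<Longrightarrow> n \<in> N \<Longrightarrow> lL a n \<Longrightarrow> a \<in> N"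
  using N1_aux M_bound by blast

lemma N3: assumes b: "b \<in> N" and c: "c \<in> N" shows "jn b c \<in> N"
proof -
  obtain k1 k2 where k: "lL b (E k1)" "lL c (E k2)" using N_bound b c by blast
  have bc: "b \<in> carrier G" and cc: "c \<in> carrier G" using b c N_carr by auto
  have "lL b (E (k1 + k2))" using lL_trans[OF bc _ _ k(1) E_mono[of k1 "k1+k2"]] by simp
  moreover have "lL c (E (k1 + k2))" using lL_trans[OF cc _ _ k(2) E_mono[of k2 "k1+k2"]] by simp
  ultimately have "lL (jn b c) (E (k1 + k2))" using jn_lub bc cc by simp
  moreover have "jn b c \<in> M" using lL_M[OF N_M[OF b] _ jn_ge1[OF bc cc]] bc cc by simp
  ultimately show ?thesis using N1 E_N by blast
qed


lemma H_dec: "x \<in> H \<Longrightarrow> \<exists>a b. a \<in> N \<and> b \<in> N \<and> x = inv a \<otimes> b"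
proof -
  assume "x \<in> H"
  then have "x \<in> generate G (Div G M \<delta>)" using Hdef by simp
  then show ?thesis
  proof (induct rule: generate.induct)
    case one then show ?case using N_one by (intro exI[of _ \<one>]) simp
  next
    case (incl h) then show ?case using N_one DS_N DS_carr by (intro exI[of _ \<one>] exI[of _ h]) simp
  next
    case (inv h) then show ?case using N_one DS_N DS_carr by (intro exI[of _ h] exI[of _ \<one>]) simp
  next
    case (eng h1 h2)
    then obtain a1 b1 a2 b2 where ab: "a1 \<in> N" "b1 \<in> N" "h1 = inv a1 \<otimes> b1" "a2 \<in> N" "b2 \<in> N" "h2 = inv a2 \<otimes> b2"
      by blast
    have c: "a1 \<in> carrier G" "b1 \<in> carrier G" "a2 \<in> carrier G" "b2 \<in> carrier G" using ab N_carr by auto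
    obtain k where k: "lL a2 (E k)" using N_bound ab(4) by blast
    define ab2 where "ab2 = inv a2 \<otimes> E k"
    have ab2M: "ab2 \<in> M" using k ab2_def by (simp add: lL_def)
    have "a2 \<otimes> ab2 \<in> N" using ab2_def c E_N by simp
    then have ab2N: "ab2 \<in> N" using N2[OF ab(4) ab2M] by simp
    have ab2c: "ab2 \<in> carrier G" using ab2_def c by simp
    define y where "y = E k \<otimes> (b1 \<otimes> ab2) \<otimes> inv (E k)"
    have yN: "y \<in> N" using bal_gen_conj2[OF bald, of "b1 \<otimes> ab2" k] N_mult[OF ab(2) ab2N] Ndef y_def by simp
    have aN: "E k \<otimes> a1 \<in> N" using N_mult E_N ab(1) by simp
    have bN: "y \<otimes> b2 \<in> N" using N_mult yN ab(5) by simp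
    have "inv (E k \<otimes> a1) \<otimes> (y \<otimes> b2) = h1 \<otimes> h2"
      using ab c y_def ab2_def by (simp add: m_assoc inv_mult_group)
    then show ?case using aN bN by metis
  qed
qed

lemma N_H: "n \<in> N \<Longrightarrow> n \<in> H"
proof -
  assume "n \<in> N"
  then obtain xs where xs: "set xs \<subseteq> Div G M \<delta>" "n = lprod G xs" using N_list by blast
  have "lprod G xs \<in> generate G (Div G M \<delta>)" using xs(1)
    by (induct xs) (auto intro: generate.one generate.incl generate.eng)
  then show ?thesis using xs Hdef by simp
qed

lemma H_sg: "subgroup H G" using generate_is_subgroup[OF Div_sub] Hdef by simp

definition nred where "nred th \<longleftrightarrow> th \<in> M \<and> (\<forall>c\<in>carrier G. lL c th \<longrightarrow> lL c \<delta> \<longrightarrow> lL c \<one>)"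

lemma nred_cop: assumes th: "nred th" and n: "n \<in> N" and c: "c \<in> carrier G" and ct: "lL c th" and cn: "lL c n"
  shows "lL c \<one>"
proof -
  have thM: "th \<in> M" using th nred_def by simp
  have thc: "th \<in> carrier G" and nc: "n \<in> carrier G" using thM n N_carr by auto
  define c' where "c' = mt th n"
  have c'c: "c' \<in> carrier G" using c'_def thc nc by simp
  have "lL \<one> c'" using mt_glb[of th n \<one>] thc nc thM N_M[OF n] c'_def by (simp add: lL_one)
  then have c'M: "c' \<in> M" using c'c by (simp add: lL_one)
  have c't: "lL c' th" and c'n: "lL c' n" using mt_le1 mt_le2 thc nc c'_def by auto
  have "c' = \<one>"
  proof (rule head_one[OF c'M])
    fix e assume ec: "e \<in> carrier G" and e1: "lL e c'" and e2: "lL e \<Delta>"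
    have "lL e n" using lL_trans[OF ec c'c nc e1 c'n] .
    then have "lL e \<delta>" using headN'[OF n ec _ e2] by simp
    moreover have "lL e th" using lL_trans[OF ec c'c thc e1 c't] .
    ultimately show "lL e \<one>" using th ec nred_def by simp
  qed
  moreover have "lL c c'" using mt_glb[of th n c] thc nc c ct cn c'_def by simp
  ultimately show ?thesis by simp
qed

lemma Dec: assumes th: "nred th" and x: "x \<in> H"
  shows "\<exists>a b. a \<in> N \<and> b \<in> N \<and> x = inv a \<otimes> b \<and> (\<forall>c\<in>carrier G. lL c a \<longrightarrow> lL c (b \<otimes> th) \<longrightarrow> lL c \<one>)"
proof -
  have thM: "th \<in> M" using th nred_def by simp
  have thc: "th \<in> carrier G" using thM by auto
  obtain a0 b0 where ab: "a0 \<in> N" "b0 \<in> N" "x = inv a0 \<otimes> b0" using H_dec[OF x] by blast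
  have a0c: "a0 \<in> carrier G" and b0c: "b0 \<in> carrier G" using ab N_carr by auto
  have a0M: "a0 \<in> M" and b0M: "b0 \<in> M" using ab N_M by auto
  define B0 where "B0 = b0 \<otimes> th"
  have B0M: "B0 \<in> M" using B0_def b0M thM by simp
  have B0c: "B0 \<in> carrier G" using B0M by auto
  define c0 where "c0 = mt a0 B0"
  have c0c: "c0 \<in> carrier G" using c0_def a0c B0c by simp
  have "lL \<one> c0" using mt_glb[of a0 B0 \<one>] a0c B0c a0M B0M c0_def by (simp add: lL_one)
  then have c0M: "c0 \<in> M" using c0c by (simp add: lL_one)
  have c0a: "lL c0 a0" and c0B: "lL c0 B0" using mt_le1 mt_le2 a0c B0c c0_def by auto
  have c0N: "c0 \<in> N" using N1[OF c0M ab(1) c0a] .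
  define j where "j = jn b0 c0"
  have jN: "j \<in> N" using N3[OF ab(2) c0N] j_def by simp
  have jc: "j \<in> carrier G" using jN N_carr by simp
  have "lL b0 B0" using lL_mult b0c thM B0_def by simp
  then have jB: "lL j B0" using jn_lub[OF b0c c0c B0c] c0B j_def by simp
  define w where "w = inv b0 \<otimes> j"
  have wc: "w \<in> carrier G" using w_def b0c jc by simp
  have wM: "w \<in> M" using jn_ge1[OF b0c c0c] j_def w_def by (simp add: lL_def)
  have bw: "b0 \<otimes> w = j" using w_def b0c jc by simp
  have wN: "w \<in> N" using N2[OF ab(2) wM] bw jN by simp
  have "lL (b0 \<otimes> w) (b0 \<otimes> th)" using bw jB B0_def by simp
  then have "lL w th" using lL_left[OF b0c wc thc] by simp
  then have "lL w \<one>" using nred_cop[OF th wN wc] wc by simp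
  then have "inv w \<in> M" using wc by (simp add: lL_one2)
  then have "w = \<one>" using M_anti wM by blast
  then have "j = b0" using bw b0c by simp
  then have c0b: "lL c0 b0" using jn_ge2[OF b0c c0c] j_def by simp
  define a where "a = inv c0 \<otimes> a0"
  define b where "b = inv c0 \<otimes> b0"
  have aM: "a \<in> M" using c0a a_def by (simp add: lL_def)
  have bM: "b \<in> M" using c0b b_def by (simp add: lL_def)
  have ac: "a \<in> carrier G" and bc: "b \<in> carrier G" using aM bM by auto
  have aN: "a \<in> N" using N2[OF c0N aM] a_def c0c a0c ab(1) by simp
  have bN: "b \<in> N" using N2[OF c0N bM] b_def c0c b0c ab(2) by simp
  have xe: "x = inv a \<otimes> b" using ab a_def b_def c0c a0c b0c by (simp add: m_assoc inv_mult_group)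
  have cop: "lL c \<one>" if cc: "c \<in> carrier G" and ca: "lL c a" and cb: "lL c (b \<otimes> th)" for c
  proof -
    have "lL (c0 \<otimes> c) (c0 \<otimes> a)" using lL_left[OF c0c cc ac] ca by simp
    then have 1: "lL (c0 \<otimes> c) a0" using a_def c0c a0c by simp
    have "lL (c0 \<otimes> c) (c0 \<otimes> (b \<otimes> th))" using lL_left[OF c0c cc] bc thc cb by simp
    then have 2: "lL (c0 \<otimes> c) B0" using b_def B0_def c0c b0c thc by (simp add: m_assoc[symmetric])
    have "lL (c0 \<otimes> c) c0" using mt_glb[of a0 B0 "c0 \<otimes> c"] 1 2 a0c B0c c0c cc c0_def by simp
    then have "lL (c0 \<otimes> c) (c0 \<otimes> \<one>)" using c0c by simp
    then show ?thesis using lL_left[OF c0c cc one_closed] by simp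
  qed
  show ?thesis using aN bN xe cop by blast
qed

lemma Dec2: assumes th: "nred th" and x: "x \<in> H"
  shows "\<exists>a b. a \<in> N \<and> b \<in> N \<and> x = inv a \<otimes> b \<and> (\<forall>P. lL (x \<otimes> th) (D P) \<longrightarrow> lL (b \<otimes> th) (D P))
     \<and> (\<forall>Q. lL (inv (x \<otimes> th)) (D Q) \<longrightarrow> lL a (D Q))"
proof -
  obtain a b where ab: "a \<in> N" "b \<in> N" "x = inv a \<otimes> b" and cop: "\<And>c. c\<in>carrier G \<Longrightarrow> lL c a \<Longrightarrow> lL c (b \<otimes> th) \<Longrightarrow> lL c \<one>"
    using Dec[OF th x] by blast
  have thM: "th \<in> M" using th nred_def by simp
  have thc: "th \<in> carrier G" using thM by auto
  have ac: "a \<in> carrier G" and bc: "b \<in> carrier G" using ab N_carr by auto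
  have aM: "a \<in> M" using ab N_M by simp
  define B where "B = b \<otimes> th"
  have BM: "B \<in> M" using B_def ab N_M thM by simp
  have Bc: "B \<in> carrier G" using BM by auto
  have xt: "x \<otimes> th = inv a \<otimes> B" using ab B_def ac bc thc by (simp add: m_assoc)
  have 1: "lL B (D P)" if h: "lL (x \<otimes> th) (D P)" for P
  proof -
    have "lL (a \<otimes> (inv a \<otimes> B)) (a \<otimes> D P)" using lL_left[of a "inv a \<otimes> B" "D P"] ac Bc h xt by simp
    then have "lL B (a \<otimes> D P)" using ac Bc by simp
    then show ?thesis using lemO[OF aM BM] cop B_def by blast
  qed
  have 2: "lL a (D Q)" if h: "lL (inv (x \<otimes> th)) (D Q)" for Q
  proof -
    have "inv (x \<otimes> th) = inv B \<otimes> a" using xt ac Bc by (simp add: inv_mult_group)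
    then have "lL (B \<otimes> (inv B \<otimes> a)) (B \<otimes> D Q)" using lL_left[of B "inv B \<otimes> a" "D Q"] ac Bc h by simp
    then have "lL a (B \<otimes> D Q)" using ac Bc by simp
    moreover have "\<And>c. c\<in>carrier G \<Longrightarrow> lL c B \<Longrightarrow> lL c a \<Longrightarrow> lL c \<one>" using cop B_def by blast
    ultimately show ?thesis using lemO[OF BM aM] by blast
  qed
  show ?thesis using ab 1 2 B_def by blast
qed

lemma LBH: assumes th: "nred th" and x: "x \<in> H" and h: "lL (x \<otimes> th) (D P)" shows "lL th (D P)"
proof -
  obtain a b where ab: "b \<in> N" "lL (b \<otimes> th) (D P)" using Dec2[OF th x] h by blast
  show ?thesis using lL_prefix_D[OF N_M[OF ab(1)] _ ab(2)] th nred_def M_carr by auto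
qed


lemma H_inv: "k \<in> H \<Longrightarrow> inv k \<in> H" using subgroup.m_inv_closed[OF H_sg] by simp
lemma H_mult: "k \<in> H \<Longrightarrow> l \<in> H \<Longrightarrow> k \<otimes> l \<in> H" using subgroup.m_closed[OF H_sg] by simp
lemma H_one: "\<one> \<in> H" using subgroup.one_closed[OF H_sg] by simp
lemma H_carr: "k \<in> H \<Longrightarrow> k \<in> carrier G" using subgroup.mem_carrier[OF H_sg] by simp

lemma least_D: assumes "x \<in> M" shows "lL x (D (LEAST P. lL x (D P)))" "\<And>P. lL x (D P) \<Longrightarrow> (LEAST P. lL x (D P)) \<le> P"
proof -
  obtain k where "lL x (D k)" using M_bound[OF assms] by blast
  then show "lL x (D (LEAST P. lL x (D P)))" by (rule LeastI)
  show "\<And>P. lL x (D P) \<Longrightarrow> (LEAST P. lL x (D P)) \<le> P" by (rule Least_le)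
qed

lemma core:
  assumes th: "nred \<theta>" and ga: "\<gamma> \<in> H" and u: "u \<in> Div G M \<Delta>"
    and mn: "\<forall>k\<in>H. wlen G SS (inv \<theta> \<otimes> \<gamma>) \<le> wlen G SS (inv \<theta> \<otimes> k)"
  shows "\<exists>\<gamma>'\<in>H. (\<forall>k\<in>H. wlen G SS (inv (\<theta> \<otimes> u) \<otimes> \<gamma>') \<le> wlen G SS (inv (\<theta> \<otimes> u) \<otimes> k))
      \<and> wlen G SS (inv \<gamma> \<otimes> \<gamma>') \<le> 3"
proof -
  have thM: "\<theta> \<in> M" using th nred_def by simp
  have thc: "\<theta> \<in> carrier G" using thM by auto
  have uM: "u \<in> M" and uD: "lL u \<Delta>" using u by (auto simp: Div_iff lL_def)
  have uc: "u \<in> carrier G" using uM by auto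
  have gc: "\<gamma> \<in> carrier G" using ga H_carr by simp
  define m where "m = (LEAST P. lL \<theta> (D P))"
  have m1: "lL \<theta> (D m)" and m2: "\<And>P. lL \<theta> (D P) \<Longrightarrow> m \<le> P" using least_D[OF thM] m_def by auto
  have "wlen G SS \<theta> \<le> m + 0" using wlen_le[OF thc m1, of 0] thM thc by (simp add: lL_def)
  then have "wlen G SS (inv \<theta> \<otimes> \<one>) \<le> m" using wlen_inv[OF thc] thc by simp
  then have "wlen G SS (inv \<theta> \<otimes> \<gamma>) \<le> m" using mn H_one by fastforce
  moreover have "inv (inv \<gamma> \<otimes> \<theta>) = inv \<theta> \<otimes> \<gamma>" using gc thc by (simp add: inv_mult_group)
  ultimately have wx: "wlen G SS (inv \<gamma> \<otimes> \<theta>) \<le> m" using wlen_inv[of "inv \<gamma> \<otimes> \<theta>"] gc thc by simp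
  obtain P Q where PQ: "P + Q = wlen G SS (inv \<gamma> \<otimes> \<theta>)" "lL (inv \<gamma> \<otimes> \<theta>) (D P)" "lL (inv (inv \<gamma> \<otimes> \<theta>)) (D Q)"
    using wlen_ge[of "inv \<gamma> \<otimes> \<theta>"] gc thc by auto
  obtain a b where ab: "a \<in> N" "b \<in> N" "inv \<gamma> = inv a \<otimes> b" "lL (b \<otimes> \<theta>) (D P)" "lL a (D Q)"
    using Dec2[OF th H_inv[OF ga]] PQ by blast
  have bM: "b \<in> M" and bc: "b \<in> carrier G" and aM: "a \<in> M" and ac: "a \<in> carrier G" using ab N_M M_carr by auto
  have "lL \<theta> (D P)" using lL_prefix_D[OF bM thc ab(4)] .
  then have "m \<le> P" using m2 by simp
  then have Q0: "Q = 0" and Pm: "P = m" using PQ(1) wx by auto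
  then have "inv a \<in> M" using ab(5) ac by (simp add: lL_def)
  then have "a = \<one>" using M_anti aM by blast
  then have gb: "inv \<gamma> = b" using ab(3) bc by simp
  have bth: "lL (b \<otimes> \<theta>) (D m)" using ab(4) Pm by simp
  have bN: "b \<in> N" using ab by simp
  define tu where "tu = \<theta> \<otimes> u"
  have tuM: "tu \<in> M" using tu_def thM uM by simp
  have tuc: "tu \<in> carrier G" using tuM by auto
  define n0 where "n0 = mt tu \<delta>"
  have n0c: "n0 \<in> carrier G" using n0_def tuc by simp
  have "lL \<one> n0" using mt_glb[of tu \<delta> \<one>] tuc tuM n0_def by (simp add: lL_one)
  then have n0M: "n0 \<in> M" using n0c by (simp add: lL_one)
  have n0tu: "lL n0 tu" and n0d: "lL n0 \<delta>" using mt_le1 mt_le2 tuc n0_def by auto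
  have n0S: "n0 \<in> Div G M \<delta>" using DS_intro n0M n0d by simp
  have n0N: "n0 \<in> N" and n0H: "n0 \<in> H" and n0SD: "n0 \<in> Div G M \<Delta>" using DS_N n0S N_H DS_S by auto
  define th' where "th' = inv n0 \<otimes> tu"
  have th'M: "th' \<in> M" using n0tu th'_def by (simp add: lL_def)
  have th'c: "th' \<in> carrier G" using th'M by auto
  have ntu: "n0 \<otimes> th' = tu" using th'_def n0c tuc by simp
  have nred': "nred th'"
    unfolding nred_def
  proof (intro conjI ballI impI)
    show "th' \<in> M" using th'M .
    fix c assume cc: "c \<in> carrier G" and c1: "lL c th'" and c2: "lL c \<delta>"
    define e where "e = mt th' \<delta>"
    have ec: "e \<in> carrier G" using e_def th'c by simp
    have "lL \<one> e" using mt_glb[of th' \<delta> \<one>] th'c th'M e_def by (simp add: lL_one)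
    then have eM: "e \<in> M" using ec by (simp add: lL_one)
    have et: "lL e th'" and ed: "lL e \<delta>" using mt_le1 mt_le2 th'c e_def by auto
    have eS: "e \<in> Div G M \<delta>" using DS_intro eM ed by simp
    have neN: "n0 \<otimes> e \<in> N" using N_mult n0N DS_N[OF eS] by simp
    have nec: "n0 \<otimes> e \<in> carrier G" using n0c ec by simp
    have ne_tu: "lL (n0 \<otimes> e) tu" using lL_left[OF n0c ec th'c] et ntu by simp
    have "lL tu (\<theta> \<otimes> D 1)" using lL_left[OF thc uc Delta_carr] uD tu_def by simp
    then have "lL (n0 \<otimes> e) (\<theta> \<otimes> D 1)" using lL_trans[OF nec tuc _ ne_tu] thc by simp
    moreover have "\<And>c. c \<in> carrier G \<Longrightarrow> lL c \<theta> \<Longrightarrow> lL c (n0 \<otimes> e) \<Longrightarrow> lL c \<one>"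
      using nred_cop[OF th neN] by blast
    ultimately have "lL (n0 \<otimes> e) (D 1)" using lemO[OF thM N_M[OF neN]] by blast
    then have "n0 \<otimes> e \<in> Div G M \<Delta>" using N_M[OF neN] by (simp add: Div_iff lL_def)
    then have "n0 \<otimes> e \<in> Div G M \<delta>" using DivEq neN by simp
    then have "lL (n0 \<otimes> e) \<delta>" using DS_le by simp
    then have "lL (n0 \<otimes> e) n0" using mt_glb[of tu \<delta> "n0 \<otimes> e"] tuc nec ne_tu n0_def by simp
    then have "lL (n0 \<otimes> e) (n0 \<otimes> \<one>)" using n0c by simp
    then have "lL e \<one>" using lL_left[OF n0c ec one_closed] by simp
    moreover have "lL c e" using mt_glb[of th' \<delta> c] th'c cc c1 c2 e_def by simp
    ultimately show "lL c \<one>" using lL_trans[OF cc ec one_closed] by simp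
  qed
  define m' where "m' = (LEAST P. lL th' (D P))"
  have mm1: "lL th' (D m')" and mm2: "\<And>P. lL th' (D P) \<Longrightarrow> m' \<le> P" using least_D[OF th'M] m'_def by auto
  have "lL tu (D (Suc m))" using lL_suffix_simple[OF u thc m1] tu_def by simp
  then have "lL (n0 \<otimes> th') (D (Suc m))" using ntu by simp
  then have "lL th' (D (Suc m))" using lL_prefix_D[OF n0M th'c] by blast
  then have mm_le: "m' \<le> Suc m" using mm2 by simp
  have "lL (n0 \<otimes> th') (D (Suc m'))" using simple_step[OF n0SD th'c mm1] .
  moreover have "lL \<theta> tu" using lL_mult thc uM tu_def by simp
  ultimately have "lL \<theta> (D (Suc m'))" using lL_trans[OF thc tuc] ntu by simp
  then have m_le: "m \<le> Suc m'" using m2 by simp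
  have LB: "m' \<le> wlen G SS (inv tu \<otimes> k)" if kH: "k \<in> H" for k
  proof -
    have kc: "k \<in> carrier G" using kH H_carr by simp
    have e1: "inv (inv tu \<otimes> k) = (inv k \<otimes> n0) \<otimes> th'" using kc tuc n0c ntu[symmetric] th'c
      by (simp add: inv_mult_group m_assoc)
    have yH: "inv k \<otimes> n0 \<in> H" using H_mult[OF H_inv[OF kH] n0H] .
    have "wlen G SS (inv tu \<otimes> k) = wlen G SS ((inv k \<otimes> n0) \<otimes> th')"
      using wlen_inv[of "inv tu \<otimes> k"] e1 kc tuc by simp
    moreover obtain P Q where "P + Q = wlen G SS ((inv k \<otimes> n0) \<otimes> th')" "lL ((inv k \<otimes> n0) \<otimes> th') (D P)"
      using wlen_ge[of "(inv k \<otimes> n0) \<otimes> th'"] kc n0c th'c by auto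
    moreover have "m' \<le> P" if "lL ((inv k \<otimes> n0) \<otimes> th') (D P)" for P
      using LBH[OF nred' yH that] mm2 by simp
    ultimately show ?thesis by fastforce
  qed
  have suff: "\<exists>\<gamma>'\<in>H. (\<forall>k\<in>H. wlen G SS (inv tu \<otimes> \<gamma>') \<le> wlen G SS (inv tu \<otimes> k)) \<and> wlen G SS (inv \<gamma> \<otimes> \<gamma>') \<le> 3"
    if g'H: "\<gamma>' \<in> H" and g'1: "wlen G SS (inv tu \<otimes> \<gamma>') \<le> m'" and g'2: "wlen G SS (inv \<gamma> \<otimes> \<gamma>') \<le> 3" for \<gamma>'
    using g'H g'2 g'1 LB by (meson le_trans)
  show ?thesis
  proof (cases "Suc m \<le> m'")
    case True
    have e: "inv (inv tu \<otimes> \<gamma>) = b \<otimes> \<theta> \<otimes> u" using gb gc tuc tu_def thc uc by (simp add: inv_mult_group m_assoc)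
    have "lL (b \<otimes> \<theta> \<otimes> u) (D (Suc m))" using lL_suffix_simple[OF u _ bth] bc thc by simp
    moreover have "lL (inv (b \<otimes> \<theta> \<otimes> u)) (D 0)" using bM thM uM bc thc uc by (simp add: lL_def)
    ultimately have "wlen G SS (b \<otimes> \<theta> \<otimes> u) \<le> Suc m + 0" using wlen_le[of "b \<otimes> \<theta> \<otimes> u" "Suc m" 0] bc thc uc by simp
    then have 1: "wlen G SS (inv tu \<otimes> \<gamma>) \<le> m'" using wlen_inv[of "inv tu \<otimes> \<gamma>"] e True tuc gc by simp
    have "wlen G SS \<one> \<le> 0 + 0" using wlen_le[of \<one> 0 0] by simp
    then have 2: "wlen G SS (inv \<gamma> \<otimes> \<gamma>) \<le> 3" using gc by simp
    show ?thesis using suff[OF ga 1 2] tu_def by simp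
  next
    case False
    then have mm: "m' \<le> m" by simp
    define B where "B = b \<otimes> n0"
    have BN: "B \<in> N" using B_def N_mult bN n0N by simp
    have BM: "B \<in> M" and Bc: "B \<in> carrier G" using BN N_M N_carr by auto
    define Xv where "Xv = D m' \<otimes> inv th'"
    have Xc: "Xv \<in> carrier G" using Xv_def th'c by simp
    have "Xv = D m' \<otimes> (inv th' \<otimes> D m') \<otimes> inv (D m')" using Xv_def th'c by (simp add: m_assoc)
    then have XM: "Xv \<in> M" using tauM2[of "inv th' \<otimes> D m'" m'] mm1 by (simp add: lL_def)
    define J where "J = jn (inv B) (inv Xv)"
    have Jc: "J \<in> carrier G" using J_def Bc Xc by simp
    have JB: "lL (inv B) J" and JX: "lL (inv Xv) J" using jn_ge1 jn_ge2 Bc Xc J_def by auto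
    have "lL J \<one>" using jn_lub[of "inv B" "inv Xv" \<one>] Bc Xc BM XM J_def by (simp add: lL_def)
    then have b'M: "inv J \<in> M" using Jc by (simp add: lL_def)
    define c where "c = B \<otimes> J"
    have cM: "c \<in> M" using JB c_def Bc by (simp add: lL_def)
    have cc: "c \<in> carrier G" using cM by auto
    have cB: "lL c B" using c_def Bc Jc b'M by (simp add: lL_def inv_mult_group m_assoc)
    have cN: "c \<in> N" using N1[OF cM BN cB] .
    have "c \<otimes> inv J = B" using c_def Bc Jc by (simp add: m_assoc)
    then have b'N: "inv J \<in> N" using N2[OF cN b'M] BN by simp
    have XJ: "Xv \<otimes> J \<in> M" using JX Xc by (simp add: lL_def)
    define e where "e = Suc m' - m"
    have me: "2 + m' = m + Suc e" using e_def m_le by simp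
    define r where "r = inv (b \<otimes> \<theta>) \<otimes> D m"
    have rM: "r \<in> M" using bth r_def by (simp add: lL_def)
    have rc: "r \<in> carrier G" using rM by auto
    define Z where "Z = Xv \<otimes> (inv B \<otimes> D 2)"
    have Zc: "Z \<in> carrier G" using Z_def Xc Bc by simp
    have s1: "B \<otimes> th' = b \<otimes> tu" using B_def ntu bc n0c th'c by (simp add: m_assoc)
    have s2a: "inv (D m') \<otimes> Z \<otimes> D m' = inv (B \<otimes> th') \<otimes> (D 2 \<otimes> D m')"
      unfolding Z_def Xv_def using Bc th'c by (simp add: m_assoc inv_mult_group)
    have s2: "inv (D m') \<otimes> Z \<otimes> D m' = inv (B \<otimes> th') \<otimes> D (2 + m')"
      unfolding s2a D_add by (rule refl)
    have s3: "D (2 + m') = D m \<otimes> (\<Delta> \<otimes> D e)"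
    proof -
      have "D (2 + m') = D (m + Suc e)" by (simp only: me)
      also have "\<dots> = D m \<otimes> D (Suc e)" by (rule D_add)
      also have "\<dots> = D m \<otimes> (\<Delta> \<otimes> D e)" by (simp only: D_Suc2)
      finally show ?thesis .
    qed
    have s4a: "inv (b \<otimes> (\<theta> \<otimes> u)) \<otimes> (D m \<otimes> (\<Delta> \<otimes> D e)) = (inv u \<otimes> \<Delta>) \<otimes> (inv \<Delta> \<otimes> (inv (b \<otimes> \<theta>) \<otimes> D m) \<otimes> \<Delta>) \<otimes> D e"
      using bc thc uc by (simp add: m_assoc inv_mult_group)
    have s4: "inv (B \<otimes> th') \<otimes> D (2 + m') = (inv u \<otimes> \<Delta>) \<otimes> (inv \<Delta> \<otimes> r \<otimes> \<Delta>) \<otimes> D e"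
      unfolding s1 s3 r_def tu_def using s4a .
    have "(inv u \<otimes> \<Delta>) \<otimes> (inv \<Delta> \<otimes> r \<otimes> \<Delta>) \<otimes> D e \<in> M"
      using uD tau1[OF rM] uc by (simp add: lL_def)
    then have Z'M: "inv (D m') \<otimes> Z \<otimes> D m' \<in> M" using s2 s4 by simp
    have "Z = D m' \<otimes> (inv (D m') \<otimes> Z \<otimes> D m') \<otimes> inv (D m')" using Zc by (simp add: m_assoc)
    then have ZM: "Z \<in> M" using tauM2[OF Z'M, of m'] by simp
    then have "lL (inv Xv) (inv B \<otimes> D 2)" using Z_def Xc Bc by (simp add: lL_def)
    moreover have "lL (inv B) (inv B \<otimes> D 2)" using lL_mult Bc by simp
    ultimately have "lL J (inv B \<otimes> D 2)" using jn_lub[of "inv B" "inv Xv"] Bc Xc J_def by simp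
    then have "lL (J \<otimes> inv (D 2)) (inv B)" using lL_rightDi[of J "inv B \<otimes> D 2" 2] Jc Bc by (simp add: m_assoc)
    then have "D 2 \<otimes> inv c \<in> M" using c_def Jc Bc by (simp add: lL_def inv_mult_group m_assoc)
    then have "inv (D 2) \<otimes> (D 2 \<otimes> inv c) \<otimes> D 2 \<in> M" using tauM1 by blast
    then have "lL c (D 2)" using cc by (simp add: lL_def m_assoc)
    moreover have "lL (inv c) (D 0)" using cM cc by (simp add: lL_def)
    ultimately have wc: "wlen G SS c \<le> 2 + 0" using wlen_le[OF cc, of 2 0] by blast
    define g' where "g' = n0 \<otimes> J"
    have JH: "J \<in> H" using H_inv[OF N_H[OF b'N]] Jc by simp
    have g'H: "g' \<in> H" using g'_def H_mult n0H JH by simp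
    have "inv \<gamma> \<otimes> g' = c" using gb g'_def c_def B_def bc n0c Jc by (simp add: m_assoc)
    then have 2: "wlen G SS (inv \<gamma> \<otimes> g') \<le> 3" using wc by simp
    define z where "z = inv th' \<otimes> J"
    have zc: "z \<in> carrier G" using z_def th'c Jc by simp
    have ze: "inv tu \<otimes> g' = z" using g'_def z_def ntu[symmetric] n0c th'c Jc by (simp add: inv_mult_group m_assoc)
    have "inv z = inv J \<otimes> th'" using z_def th'c Jc by (simp add: inv_mult_group)
    then have z1: "lL z (D 0)" using b'M th'M zc by (simp add: lL_def)
    have "inv (inv z) \<otimes> D m' = inv (D m') \<otimes> (Xv \<otimes> J) \<otimes> D m'" using z_def Xv_def th'c Jc by (simp add: m_assoc)
    then have z2: "lL (inv z) (D m')" using tauM1[OF XJ, of m'] by (simp add: lL_def)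
    have "wlen G SS z \<le> 0 + m'" using wlen_le[OF zc z1 z2] .
    then have 1: "wlen G SS (inv tu \<otimes> g') \<le> m'" using ze by simp
    show ?thesis using suff[OF g'H 1 2] tu_def by simp
  qed
qed

end

lemma (in para) nred_theta:
  assumes th: "\<theta> \<in> HN_reduced_set G M \<Delta> \<delta>" and thM: "\<theta> \<in> M"
  shows "nred \<theta>"
proof -
  obtain a and p :: int where ap: "unmovable G M \<Delta> a" "\<theta> = a \<otimes> \<Delta> [^] p" "N_reduced G M \<delta> a"
    "p = 0 \<or> (p < 0 \<and> \<not> leL G M (inv \<delta> \<otimes> \<Delta>) a)"
    using th unfolding HN_reduced_set_def HN_reduced_def by blast
  have aM: "a \<in> M" using ap(1) unfolding unmovable_def by simp
  have ac: "a \<in> carrier G" using aM by auto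
  have p0: "p = 0"
  proof (rule ccontr)
    assume "p \<noteq> 0"
    then have pn: "p < 0" using ap(4) by simp
    define k where "k = nat (-p)"
    have k0: "k > 0" using pn k_def by simp
    then obtain k' where kk: "k = Suc k'" using not0_implies_Suc by blast
    have pk: "p = - int k" using pn k_def by simp
    have "\<Delta> [^] p = inv (D k)" by (subst pk) (rule int_pow_neg_int[OF Delta_carr])
    then have aeq: "\<theta> = a \<otimes> inv (D k)" using ap(2) by simp
    have thc: "\<theta> \<in> carrier G" using thM by auto
    define tt where "tt = inv (D k) \<otimes> \<theta> \<otimes> D k"
    have ttM: "tt \<in> M" using tauM1[OF thM, of k] tt_def by simp
    have ttc: "tt \<in> carrier G" using ttM by auto
    have a1: "a = D k \<otimes> tt" using aeq ac unfolding tt_def by (simp add: m_assoc)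
    have "inv \<Delta> \<otimes> a = inv \<Delta> \<otimes> ((\<Delta> \<otimes> D k') \<otimes> tt)" by (simp only: a1 kk D_Suc2)
    also have "\<dots> = D k' \<otimes> tt" using ttc by (simp add: m_assoc)
    finally have "lL \<Delta> a" using ttM by (simp add: lL_def)
    then show False using ap(1) unfolding unmovable_def by simp
  qed
  then have tha: "\<theta> = a" using ap(2) ac by simp
  have mt1: "mt a \<delta> = \<one>" using ap(3) unfolding N_reduced_def by simp
  show ?thesis unfolding nred_def
  proof (intro conjI ballI impI)
    show "\<theta> \<in> M" using thM .
    fix c assume "c \<in> carrier G" "lL c \<theta>" "lL c \<delta>"
    then show "lL c \<one>" using mt_glb[of a \<delta> c] ac tha mt1 by simp
  qed
qed

theorem lemma5p9:
  fixes G (structure)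
  assumes "garside G M \<Delta>"
    and "parabolic G M \<Delta> H N \<delta>"
    and "S = Div G M \<Delta> - {\<one>}"
    and "T = HN_reduced_set G M \<Delta> \<delta>"
    and "\<alpha> \<in> carrier G"
    and "\<beta> \<in> proj G S H \<alpha>"
    and "u \<in> S"
    and "\<theta> \<in> T"
    and "H #> \<theta> = H #> \<alpha>"
    and "\<theta> \<in> M"
  shows "\<exists>\<beta>' \<in> proj G S H (\<alpha> \<otimes> u). gdist G S \<beta> \<beta>' \<le> 3"
proof -
  have grp: "group G" using assms(1) unfolding garside_def by simp
  have "para G M \<Delta> H N \<delta>"
    unfolding para_def para_axioms_def gar_def gar_axioms_def using grp assms(1,2) by simp
  then interpret P: para G M \<Delta> H N \<delta> .
  have th: "P.nred \<theta>" using P.nred_theta assms(4,8,10) by simp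
  have thc: "\<theta> \<in> carrier G" using assms(10) P.M_carr by simp
  have ac: "\<alpha> \<in> carrier G" using assms(5) .
  have "\<alpha> \<in> H #> \<alpha>" using group.rcos_self[OF grp ac P.H_sg] .
  then have "\<alpha> \<in> H #> \<theta>" using assms(9) by simp
  then obtain h0 where h0: "h0 \<in> H" "\<alpha> = h0 \<otimes> \<theta>" unfolding r_coset_def by auto
  have h0c: "h0 \<in> carrier G" using h0 P.H_carr by simp
  have bH: "\<beta> \<in> H" and bd: "gdist G S \<alpha> \<beta> = setdist G S \<alpha> H" using assms(6) unfolding proj_def by auto
  have bc: "\<beta> \<in> carrier G" using bH P.H_carr by simp
  have bmin: "gdist G S \<alpha> \<beta> \<le> gdist G S \<alpha> k" if "k \<in> H" for k
    unfolding bd setdist_def using that by (intro Least_le) auto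
  define \<gamma> where "\<gamma> = inv h0 \<otimes> \<beta>"
  have gH: "\<gamma> \<in> H" using \<gamma>_def P.H_mult P.H_inv h0 bH by simp
  have gc: "\<gamma> \<in> carrier G" using gH P.H_carr by simp
  have mn: "\<forall>k\<in>H. wlen G P.SS (inv \<theta> \<otimes> \<gamma>) \<le> wlen G P.SS (inv \<theta> \<otimes> k)"
  proof
    fix k assume kH: "k \<in> H"
    have kc: "k \<in> carrier G" using kH P.H_carr by simp
    have "gdist G S \<alpha> \<beta> \<le> gdist G S \<alpha> (h0 \<otimes> k)" using bmin P.H_mult h0 kH by simp
    moreover have "inv \<alpha> \<otimes> \<beta> = inv \<theta> \<otimes> \<gamma>" using h0 \<gamma>_def h0c thc bc by (simp add: P.inv_mult_group P.m_assoc)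
    moreover have "inv \<alpha> \<otimes> (h0 \<otimes> k) = inv \<theta> \<otimes> k" using h0 h0c thc kc by (simp add: P.inv_mult_group P.m_assoc)
    ultimately show "wlen G P.SS (inv \<theta> \<otimes> \<gamma>) \<le> wlen G P.SS (inv \<theta> \<otimes> k)"
      unfolding gdist_def assms(3) by simp
  qed
  have uS: "u \<in> Div G M \<Delta>" using assms(3,7) by simp
  have uc: "u \<in> carrier G" using uS P.Div_sub by auto
  obtain \<gamma>' where g'H: "\<gamma>' \<in> H" and g'1: "\<forall>k\<in>H. wlen G P.SS (inv (\<theta> \<otimes> u) \<otimes> \<gamma>') \<le> wlen G P.SS (inv (\<theta> \<otimes> u) \<otimes> k)"
    and g'2: "wlen G P.SS (inv \<gamma> \<otimes> \<gamma>') \<le> 3"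
    using P.core[OF th gH uS mn] by blast
  have g'c: "\<gamma>' \<in> carrier G" using g'H P.H_carr by simp
  define \<beta>' where "\<beta>' = h0 \<otimes> \<gamma>'"
  have b'H: "\<beta>' \<in> H" using \<beta>'_def P.H_mult h0 g'H by simp
  have dd: "gdist G S (\<alpha> \<otimes> u) y = wlen G P.SS (inv (\<theta> \<otimes> u) \<otimes> (inv h0 \<otimes> y))" if "y \<in> carrier G" for y
    unfolding gdist_def assms(3) using h0 h0c thc uc that by (simp add: P.inv_mult_group P.m_assoc)
  have b'd: "gdist G S (\<alpha> \<otimes> u) \<beta>' = wlen G P.SS (inv (\<theta> \<otimes> u) \<otimes> \<gamma>')"
    using dd[of \<beta>'] \<beta>'_def h0c g'c by simp
  have "setdist G S (\<alpha> \<otimes> u) H = gdist G S (\<alpha> \<otimes> u) \<beta>'"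
    unfolding setdist_def
  proof (rule Least_equality)
    show "\<exists>y\<in>H. gdist G S (\<alpha> \<otimes> u) y = gdist G S (\<alpha> \<otimes> u) \<beta>'" using b'H by blast
    fix n assume "\<exists>y\<in>H. gdist G S (\<alpha> \<otimes> u) y = n"
    then obtain y where yH: "y \<in> H" and yn: "gdist G S (\<alpha> \<otimes> u) y = n" by blast
    have "inv h0 \<otimes> y \<in> H" using P.H_mult P.H_inv h0 yH by simp
    then show "gdist G S (\<alpha> \<otimes> u) \<beta>' \<le> n" using g'1 b'd dd[of y] yn yH P.H_carr by simp
  qed
  then have b'P: "\<beta>' \<in> proj G S H (\<alpha> \<otimes> u)" unfolding proj_def using b'H by simp
  have "inv \<beta> \<otimes> \<beta>' = inv \<gamma> \<otimes> \<gamma>'" using \<gamma>_def \<beta>'_def h0c bc g'c by (simp add: P.inv_mult_group P.m_assoc)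
  then have "gdist G S \<beta> \<beta>' \<le> 3" unfolding gdist_def assms(3) using g'2 by simp
  then show ?thesis using b'P by blast
qed

end
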